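(* Let $a\in(0,1)$ and consider the planar system $$\dot x = x\left(\tfrac12|x|^a-|y|\right),\qquad \dot y = y|y|\,(|x|^a-|y|).$$ Then the equilibrium $0$ is fragmentarily asymptotically stable but not essentially asymptotically stable.
   Context: For a flow on $\mathbb{R}^n$, $\ell$ denotes Lebesgue measure and $B_\delta(X)$ the $\delta$-neighbourhood of a set $X$. The basin ${\cal B}(X)$ is the set of points whose $\omega$-limit set lies in $X$; for $\delta>0$ the $\delta$-local basin ${\cal B}_\delta(X)$ is the set of points of ${\cal B}(X)$ whose forward trajectory never leaves $B_\delta(X)$. $X$ is fragmentarily asymptotically stable (f.a.s.) if $\ell({\cal B}_\delta(X))>0$ for every $\delta>0$. $X$ is asymptotically stable relative to a set $N$ if for every neighbourhood $U$ of $X$ there is a neighbourhood $V$ of $X$ such that trajectories starting in $V\cap N$ remain in $U$ for all positive time, and there is a neighbourhood $W$ of $X$ such that trajectories starting in $W\cap N$ have $\omega$-limit set in $X$. $X$ is essentially asymptotically stable (e.a.s.) if it is asymptotically stable relative to some $N$ with $\lim_{\varepsilon\to0}\ell(B_\varepsilon(X)\cap N)/\ell(B_\varepsilon(X))=1$. Here $X=\{0\}$. *)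

theory Defs
  imports "HOL-Analysis.Analysis"
begin

type_synonym pt = "real \<times> real"

definition vf :: "real \<Rightarrow> pt \<Rightarrow> pt" where
  "vf a p = (let x = fst p; y = snd p in
     (x * ((1/2) * \<bar>x\<bar> powr a - \<bar>y\<bar>), y * \<bar>y\<bar> * (\<bar>x\<bar> powr a - \<bar>y\<bar>)))"

definition sol_on :: "(pt \<Rightarrow> pt) \<Rightarrow> pt \<Rightarrow> real \<Rightarrow> (real \<Rightarrow> pt) \<Rightarrow> bool" where
  "sol_on F p T \<gamma> \<longleftrightarrow> 0 \<le> T \<and> \<gamma> 0 = p \<and>
     (\<forall>t\<in>{0..T}. (\<gamma> has_vector_derivative F (\<gamma> t)) (at t within {0..T}))"

definition complete_sol :: "(pt \<Rightarrow> pt) \<Rightarrow> pt \<Rightarrow> (real \<Rightarrow> pt) \<Rightarrow> bool" where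
  "complete_sol F p \<gamma> \<longleftrightarrow> \<gamma> 0 = p \<and>
     (\<forall>t\<ge>0. (\<gamma> has_vector_derivative F (\<gamma> t)) (at t within {0..}))"

definition omega_limit :: "(real \<Rightarrow> pt) \<Rightarrow> pt set" where
  "omega_limit \<gamma> = {q. \<exists>s::nat \<Rightarrow> real. filterlim s at_top sequentially \<and> (\<gamma> \<circ> s) \<longlonglongrightarrow> q}"

definition stays_in :: "(pt \<Rightarrow> pt) \<Rightarrow> pt \<Rightarrow> pt set \<Rightarrow> bool" where
  "stays_in F p U \<longleftrightarrow> (\<forall>T \<gamma>. sol_on F p T \<gamma> \<longrightarrow> (\<forall>t\<in>{0..T}. \<gamma> t \<in> U))"

definition attracted :: "(pt \<Rightarrow> pt) \<Rightarrow> pt set \<Rightarrow> pt \<Rightarrow> bool" where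
  "attracted F X p \<longleftrightarrow> (\<exists>\<gamma>. complete_sol F p \<gamma>) \<and>
     (\<forall>\<gamma>. complete_sol F p \<gamma> \<longrightarrow> omega_limit \<gamma> \<subseteq> X)"

definition nbhd :: "pt set \<Rightarrow> real \<Rightarrow> pt set" where
  "nbhd X \<delta> = {y. \<exists>x\<in>X. dist y x < \<delta>}"

definition basin :: "(pt \<Rightarrow> pt) \<Rightarrow> pt set \<Rightarrow> pt set" where
  "basin F X = {p. attracted F X p}"

definition local_basin :: "(pt \<Rightarrow> pt) \<Rightarrow> pt set \<Rightarrow> real \<Rightarrow> pt set" where
  "local_basin F X \<delta> = {p \<in> basin F X. stays_in F p (nbhd X \<delta>)}"

definition frag_as :: "(pt \<Rightarrow> pt) \<Rightarrow> pt set \<Rightarrow> bool" where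
  "frag_as F X \<longleftrightarrow> (\<forall>\<delta>>0. local_basin F X \<delta> \<in> sets lebesgue \<and>
      emeasure lebesgue (local_basin F X \<delta>) > 0)"

definition as_rel :: "(pt \<Rightarrow> pt) \<Rightarrow> pt set \<Rightarrow> pt set \<Rightarrow> bool" where
  "as_rel F X N \<longleftrightarrow>
     (\<forall>U. open U \<and> X \<subseteq> U \<longrightarrow>
        (\<exists>V. open V \<and> X \<subseteq> V \<and> (\<forall>p\<in>V \<inter> N. stays_in F p U))) \<and>
     (\<exists>W. open W \<and> X \<subseteq> W \<and> (\<forall>p\<in>W \<inter> N. attracted F X p))"

definition ess_as :: "(pt \<Rightarrow> pt) \<Rightarrow> pt set \<Rightarrow> bool" where
  "ess_as F X \<longleftrightarrow> (\<exists>N \<in> sets lebesgue. as_rel F X N \<and>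
     ((\<lambda>\<epsilon>. measure lebesgue (nbhd X \<epsilon> \<inter> N) / measure lebesgue (nbhd X \<epsilon>)) \<longlongrightarrow> 1)
       (at_right 0))"

end

theory Submission
  imports Defs
begin

lemma deriv_nonneg_mono:
  fixes f f' :: "real \<Rightarrow> real"
  assumes d: "\<And>t. t \<in> {a..b} \<Longrightarrow> (f has_real_derivative f' t) (at t within {a..b})"
    and nn: "\<And>t. t \<in> {a..b} \<Longrightarrow> 0 \<le> f' t" and st: "a \<le> s" "s \<le> t" "t \<le> b"
  shows "f s \<le> f t"
proof -
  have c: "continuous_on {a..b} f"
    using d by (meson DERIV_continuous continuous_on_eq_continuous_within)
  show ?thesis
  proof (rule DERIV_nonneg_imp_increasing_open[OF st(2)])
    fix x assume x: "s < x" "x < t"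
    then have "at x within {a..b} = at x" using st by (intro at_within_Icc_at) auto
    then show "\<exists>y. (f has_real_derivative y) (at x) \<and> 0 \<le> y"
      using d[of x] nn[of x] x st by auto
  next
    show "continuous_on {s..t} f" using st by (intro continuous_on_subset[OF c]) auto
  qed
qed

lemma deriv_nonpos_antimono:
  fixes f f' :: "real \<Rightarrow> real"
  assumes d: "\<And>t. t \<in> {a..b} \<Longrightarrow> (f has_real_derivative f' t) (at t within {a..b})"
    and nn: "\<And>t. t \<in> {a..b} \<Longrightarrow> f' t \<le> 0" and st: "a \<le> s" "s \<le> t" "t \<le> b"
  shows "f t \<le> f s"
proof -
  have "- f s \<le> - f t"
    by (rule deriv_nonneg_mono[where f="\<lambda>x. - f x" and f'="\<lambda>x. - f' x"])
       (auto intro!: derivative_eq_intros d simp: nn st)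
  then show ?thesis by simp
qed

lemma hk_bounds:
  fixes h k :: "real \<Rightarrow> real"
  assumes d: "\<And>t. t \<in> {0..T} \<Longrightarrow> (h has_real_derivative h t * k t) (at t within {0..T})"
    and kb: "\<And>t. t \<in> {0..T} \<Longrightarrow> \<bar>k t\<bar> \<le> K" and hn: "\<And>t. t \<in> {0..T} \<Longrightarrow> 0 \<le> h t"
    and t: "t \<in> {0..T}"
  shows "h 0 * exp (- K * t) \<le> h t" "h t \<le> h 0 * exp (K * t)"
proof -
  have "h 0 * exp (K * 0) \<le> h t * exp (K * t)"
  proof (rule deriv_nonneg_mono[where f="\<lambda>s. h s * exp (K * s)" and a=0 and b=T
        and f'="\<lambda>s. h s * exp (K * s) * (k s + K)"])
    fix s assume s: "s \<in> {0..T}"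
    show "((\<lambda>s. h s * exp (K * s)) has_real_derivative h s * exp (K * s) * (k s + K)) (at s within {0..T})"
      by (rule derivative_eq_intros d[OF s] refl | simp add: algebra_simps)+
    have "0 \<le> k s + K" using kb[OF s] by linarith
    then show "0 \<le> h s * exp (K * s) * (k s + K)" using hn[OF s] by simp
  qed (use t in auto)
  then have "h 0 \<le> h t * exp (K * t)" by simp
  then have "h 0 * exp (- K * t) \<le> h t * exp (K * t) * exp (- K * t)" by simp
  also have "\<dots> = h t" by (simp add: exp_minus field_simps)
  finally show "h 0 * exp (- K * t) \<le> h t" .
  have "h t * exp (- K * t) \<le> h 0 * exp (- K * 0)"
  proof (rule deriv_nonpos_antimono[where f="\<lambda>s. h s * exp (- K * s)" and a=0 and b=T
        and f'="\<lambda>s. h s * exp (- K * s) * (k s - K)"])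
    fix s assume s: "s \<in> {0..T}"
    show "((\<lambda>s. h s * exp (- K * s)) has_real_derivative h s * exp (- K * s) * (k s - K)) (at s within {0..T})"
      by (rule derivative_eq_intros d[OF s] refl | simp add: algebra_simps)+
    have "k s - K \<le> 0" using kb[OF s] by linarith
    then show "h s * exp (- K * s) * (k s - K) \<le> 0" using hn[OF s]
      by (simp add: mult_nonneg_nonpos)
  qed (use t in auto)
  then have "h t * exp (- K * t) * exp (K * t) \<le> h 0 * exp (K * t)" by simp
  then show "h t \<le> h 0 * exp (K * t)" by (simp add: exp_minus field_simps)
qed

lemma gronwall_sol:
  fixes f :: "'a::real_inner \<Rightarrow> 'a" and g1 g2 :: "real \<Rightarrow> 'a"
  assumes L: "0 \<le> L" and lip: "\<And>u v. u \<in> S \<Longrightarrow> v \<in> S \<Longrightarrow> norm (f u - f v) \<le> L * norm (u - v)"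
    and d1: "\<And>t. t \<in> {0..T} \<Longrightarrow> (g1 has_vector_derivative f (g1 t)) (at t within {0..T})"
    and d2: "\<And>t. t \<in> {0..T} \<Longrightarrow> (g2 has_vector_derivative f (g2 t)) (at t within {0..T})"
    and S1: "\<And>t. t \<in> {0..T} \<Longrightarrow> g1 t \<in> S" and S2: "\<And>t. t \<in> {0..T} \<Longrightarrow> g2 t \<in> S"
    and t: "t \<in> {0..T}"
  shows "norm (g1 t - g2 t) \<le> norm (g1 0 - g2 0) * exp (L * t)"
proof -
  define h where "h s = inner (g1 s - g2 s) (g1 s - g2 s)" for s
  define D where "D s = 2 * inner (g1 s - g2 s) (f (g1 s) - f (g2 s))" for s
  have hd: "(h has_real_derivative D s) (at s within {0..T})" if s: "s \<in> {0..T}" for s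
  proof -
    have "(g1 has_derivative (\<lambda>x. x *\<^sub>R f (g1 s))) (at s within {0..T})"
      using d1[OF s] by (simp add: has_vector_derivative_def)
    moreover have "(g2 has_derivative (\<lambda>x. x *\<^sub>R f (g2 s))) (at s within {0..T})"
      using d2[OF s] by (simp add: has_vector_derivative_def)
    ultimately have "(h has_derivative (\<lambda>x. inner (g1 s - g2 s) (x *\<^sub>R f (g1 s) - x *\<^sub>R f (g2 s))
        + inner (x *\<^sub>R f (g1 s) - x *\<^sub>R f (g2 s)) (g1 s - g2 s))) (at s within {0..T})"
      unfolding h_def by (intro derivative_eq_intros) auto
    then show ?thesis unfolding has_field_derivative_def D_def
      by (rule has_derivative_eq_rhs) (auto simp: fun_eq_iff inner_commute algebra_simps inner_diff_right inner_diff_left)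
  qed
  have Dle: "D s \<le> 2 * L * h s" if s: "s \<in> {0..T}" for s
  proof -
    have "inner (g1 s - g2 s) (f (g1 s) - f (g2 s)) \<le> norm (g1 s - g2 s) * norm (f (g1 s) - f (g2 s))"
      by (rule norm_cauchy_schwarz)
    also have "\<dots> \<le> norm (g1 s - g2 s) * (L * norm (g1 s - g2 s))"
      by (intro mult_left_mono lip S1 S2 s) auto
    also have "\<dots> = L * h s" by (simp add: h_def power2_norm_eq_inner[symmetric] power2_eq_square)
    finally show ?thesis by (simp add: D_def)
  qed
  have "h t * exp (- (2*L) * t) \<le> h 0 * exp (- (2*L) * 0)"
  proof (rule deriv_nonpos_antimono[where f="\<lambda>s. h s * exp (- (2*L) * s)" and a=0 and b=T
        and f'="\<lambda>s. exp (- (2*L) * s) * (D s - 2 * L * h s)"])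
    fix s assume s: "s \<in> {0..T}"
    show "((\<lambda>s. h s * exp (- (2*L) * s)) has_real_derivative exp (- (2*L) * s) * (D s - 2 * L * h s)) (at s within {0..T})"
      by (rule derivative_eq_intros hd[OF s] refl | simp add: algebra_simps)+
    show "exp (- (2*L) * s) * (D s - 2 * L * h s) \<le> 0"
      using Dle[OF s] by (simp add: mult_nonneg_nonpos)
  qed (use t in auto)
  then have "h t \<le> h 0 * exp (2 * L * t)"
    by (simp add: exp_minus field_simps)
  then have "(norm (g1 t - g2 t))^2 \<le> (norm (g1 0 - g2 0) * exp (L * t))^2"
    by (simp add: h_def power2_norm_eq_inner power_mult_distrib exp_double[symmetric] mult.assoc)
  then show ?thesis
    by (rule power2_le_imp_le) simp
qed

lemma picard_exists:
  fixes f :: "'a::euclidean_space \<Rightarrow> 'a"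
  assumes L: "0 \<le> L" and lip: "\<And>u v. norm (f u - f v) \<le> L * norm (u - v)"
  shows "\<exists>\<gamma>. \<gamma> 0 = p \<and> (\<forall>t\<ge>0. (\<gamma> has_vector_derivative f (\<gamma> t)) (at t within {0..}))"
proof -
  have fc: "continuous_on UNIV f"
    by (rule lipschitz_on_continuous_on[of L]) (rule lipschitz_onI, use lip L in \<open>auto simp: dist_norm\<close>)
  define P :: "nat \<Rightarrow> real \<Rightarrow> 'a" where "P = rec_nat (\<lambda>t. p) (\<lambda>n Q t. p + integral {0..t} (\<lambda>s. f (Q s)))"
  have P0: "P 0 = (\<lambda>t. p)" by (simp add: P_def)
  have PS: "P (Suc n) = (\<lambda>t. p + integral {0..t} (\<lambda>s. f (P n s)))" for n by (simp add: P_def)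
  have PS': "P (Suc n) t = p + integral {0..t} (\<lambda>s. f (P n s))" for n t by (simp add: PS)
  have cont: "continuous_on {0..T} (P n)" for n T
  proof (induction n)
    case 0 then show ?case by (simp add: P0)
  next
    case (Suc n)
    have fc1: "continuous_on {0..T} (\<lambda>s. f (P n s))"
      using Suc by (intro continuous_on_compose2[OF fc]) auto
    have "continuous_on {0..T} (\<lambda>t. integral {0..t} (\<lambda>s. f (P n s)))"
      by (rule indefinite_integral_continuous_1, rule integrable_continuous_real, rule fc1)
    then show ?case unfolding PS by (intro continuous_intros)
  qed
  have fcont: "continuous_on {0..T} (\<lambda>s. f (P n s))" for n T
    using cont by (intro continuous_on_compose2[OF fc]) auto
  have fint: "(\<lambda>s. f (P n s)) integrable_on {0..T}" for n T
    by (intro integrable_continuous_real fcont)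
  define C where "C = norm (f p)"
  have bound: "norm (P (Suc n) t - P n t) \<le> C * L^n * t^(Suc n) / fact (Suc n)" if "0 \<le> t" for n t
    using that
  proof (induction n arbitrary: t)
    case 0
    then show ?case by (simp add: PS P0 C_def)
  next
    case (Suc n)
    have eq: "P (Suc (Suc n)) t - P (Suc n) t = integral {0..t} (\<lambda>s. f (P (Suc n) s) - f (P n s))"
      unfolding PS'[of "Suc n" t] PS'[of n t] by (simp add: integral_diff[OF fint fint])
    define c where "c = L * (C * L^n / fact (Suc n))"
    have dpow: "((\<lambda>s. c * (s^(Suc k) / real (Suc k))) has_real_derivative c * s^k) (at s within S)" for k s S
    proof -
      have "((\<lambda>s. s^(Suc k)) has_real_derivative real (Suc k) * s^k) (at s within S)"
        using DERIV_pow[of "Suc k" s] has_field_derivative_at_within by fastforce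
      then have "((\<lambda>s. s^(Suc k) / real (Suc k)) has_real_derivative real (Suc k) * s^k / real (Suc k)) (at s within S)"
        by (rule DERIV_cdivide)
      then have "((\<lambda>s. s^(Suc k) / real (Suc k)) has_real_derivative s^k) (at s within S)"
        by (simp del: of_nat_Suc)
      then show ?thesis by (rule DERIV_cmult)
    qed
    have int: "((\<lambda>s. c * s^(Suc n)) has_integral
          (c * (t^(Suc (Suc n)) / real (Suc (Suc n))) - c * (0^(Suc (Suc n)) / real (Suc (Suc n))))) {0..t}"
      by (rule fundamental_theorem_of_calculus[where f="\<lambda>s. c * (s^(Suc (Suc n)) / real (Suc (Suc n)))"])
        (use Suc.prems in simp, rule dpow[of "Suc n", unfolded has_real_derivative_iff_has_vector_derivative])
    have "norm (integral {0..t} (\<lambda>s. f (P (Suc n) s) - f (P n s))) \<le>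
        integral {0..t} (\<lambda>s. c * s^(Suc n))"
    proof (rule integral_norm_bound_integral)
      show "(\<lambda>s. f (P (Suc n) s) - f (P n s)) integrable_on {0..t}"
        by (intro integrable_diff fint)
      show "(\<lambda>s. c * s ^ Suc n) integrable_on {0..t}"
        using int by blast
      fix s assume s: "s \<in> {0..t}"
      have "norm (f (P (Suc n) s) - f (P n s)) \<le> L * norm (P (Suc n) s - P n s)" by (rule lip)
      also have "\<dots> \<le> L * (C * L^n * s^(Suc n) / fact (Suc n))"
        using Suc.IH[of s] s L by (intro mult_left_mono) auto
      finally show "norm (f (P (Suc n) s) - f (P n s)) \<le> c * s ^ Suc n"
        by (simp add: c_def)
    qed
    also have "\<dots> = c * (t^(Suc (Suc n)) / real (Suc (Suc n)))"
      using integral_unique[OF int] by simp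
    also have "\<dots> = C * L ^ Suc n * t ^ Suc (Suc n) / fact (Suc (Suc n))"
      unfolding c_def by (simp add: field_simps)
    finally show ?case by (simp add: eq)
  qed
  define \<gamma> where "\<gamma> t = p + (\<Sum>i. P (Suc i) t - P i t)" for t
  have ul: "uniform_limit {0..T} P \<gamma> sequentially" if T: "0 \<le> T" for T
  proof -
    define M where "M n = C * L^n * T^(Suc n) / fact (Suc n)" for n
    have sumM: "summable M"
    proof (rule summable_comparison_test')
      show "summable (\<lambda>n. (C * T) * (inverse (fact n) * (L*T)^n))"
        by (intro summable_mult summable_exp)
      fix n :: nat
      have "fact n \<le> (fact (Suc n) :: real)" by (rule fact_mono) auto
      moreover have "0 \<le> C * T * (L*T)^n" using L T by (simp add: C_def)
      ultimately have "C * T * (L*T)^n / fact (Suc n) \<le> C * T * (L*T)^n / fact n"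
        by (intro divide_left_mono) auto
      then show "norm (M n) \<le> (C * T) * (inverse (fact n) * (L*T)^n)"
        using L T by (simp add: M_def C_def power_mult_distrib field_simps)
    qed
    have "uniform_limit {0..T} (\<lambda>n t. \<Sum>i<n. P (Suc i) t - P i t) (\<lambda>t. suminf (\<lambda>i. P (Suc i) t - P i t)) sequentially"
    proof (rule Weierstrass_m_test[OF _ sumM])
      fix n t assume t: "t \<in> {0..T}"
      have "norm (P (Suc n) t - P n t) \<le> C * L^n * t^(Suc n) / fact (Suc n)" using t bound by auto
      also have "\<dots> \<le> M n" unfolding M_def using t L
        by (intro divide_right_mono mult_left_mono power_mono) (auto simp: C_def)
      finally show "norm (P (Suc n) t - P n t) \<le> M n" .
    qed
    then show ?thesis
      unfolding uniform_limit_iff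
    proof (intro allI impI)
      fix e :: real assume "e > 0"
      assume H: "\<forall>e>0. \<forall>\<^sub>F n in sequentially. \<forall>x\<in>{0..T}. dist (\<Sum>i<n. P (Suc i) x - P i x) (\<Sum>i. P (Suc i) x - P i x) < e"
      show "\<forall>\<^sub>F n in sequentially. \<forall>x\<in>{0..T}. dist (P n x) (\<gamma> x) < e"
        using H[rule_format, OF \<open>e>0\<close>]
      proof (rule eventually_mono, intro ballI)
        fix n x assume "\<forall>x\<in>{0..T}. dist (\<Sum>i<n. P (Suc i) x - P i x) (\<Sum>i. P (Suc i) x - P i x) < e" "x \<in> {0..T}"
        then have "dist (\<Sum>i<n. P (Suc i) x - P i x) (\<Sum>i. P (Suc i) x - P i x) < e" by blast
        moreover have "P n x = p + (\<Sum>i<n. P (Suc i) x - P i x)"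
          using sum_lessThan_telescope[of "\<lambda>i. P i x" n] by (simp add: P0)
        ultimately show "dist (P n x) (\<gamma> x) < e" by (simp add: \<gamma>_def dist_norm)
      qed
    qed
  qed
  have gcont: "continuous_on {0..T} \<gamma>" if "0 \<le> T" for T
    by (rule uniform_limit_theorem[OF _ ul[OF that]]) (auto intro: always_eventually cont)
  have gfcont: "continuous_on {0..T} (\<lambda>s. f (\<gamma> s))" if "0 \<le> T" for T
    using gcont[OF that] by (intro continuous_on_compose2[OF fc]) auto
  have inteq: "\<gamma> t = p + integral {0..t} (\<lambda>s. f (\<gamma> s))" if t: "0 \<le> t" for t
  proof -
    have ulf: "uniform_limit {0..t} (\<lambda>n s. f (P n s)) (\<lambda>s. f (\<gamma> s)) sequentially"
      unfolding uniform_limit_iff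
    proof (intro allI impI)
      fix e :: real assume e: "e > 0"
      have "\<forall>\<^sub>F n in sequentially. \<forall>x\<in>{0..t}. dist (P n x) (\<gamma> x) < e / (L + 1)"
        using ul[OF t] e L unfolding uniform_limit_iff by auto
      then show "\<forall>\<^sub>F n in sequentially. \<forall>x\<in>{0..t}. dist (f (P n x)) (f (\<gamma> x)) < e"
      proof (rule eventually_mono, intro ballI)
        fix n x assume H: "\<forall>x\<in>{0..t}. dist (P n x) (\<gamma> x) < e / (L + 1)" and x: "x \<in> {0..t}"
        have d1: "dist (f (P n x)) (f (\<gamma> x)) \<le> L * dist (P n x) (\<gamma> x)"
          using lip by (simp add: dist_norm)
        have "dist (P n x) (\<gamma> x) < e / (L + 1)" using H x by blast
        then have "L * dist (P n x) (\<gamma> x) \<le> L * (e / (L + 1))" using L by (intro mult_left_mono) auto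
        with d1 have "dist (f (P n x)) (f (\<gamma> x)) \<le> L * (e / (L + 1))" by linarith
        also have "\<dots> < e" using L e by (simp add: field_simps)
        finally show "dist (f (P n x)) (f (\<gamma> x)) < e" .
      qed
    qed
    obtain I J where I: "\<And>n. ((\<lambda>s. f (P n s)) has_integral I n) {0..t}"
      and J: "((\<lambda>s. f (\<gamma> s)) has_integral J) {0..t}" and IJ: "I \<longlonglongrightarrow> J"
      by (rule uniform_limit_integral[OF ulf fcont]) auto
    have "(\<lambda>n. P (Suc n) t) \<longlonglongrightarrow> \<gamma> t"
      using tendsto_uniform_limitI[OF ul[OF t], of t] t
      by (intro filterlim_compose[OF _ filterlim_Suc]) auto
    moreover have "(\<lambda>n. P (Suc n) t) = (\<lambda>n. p + I n)"
      using integral_unique[OF I] by (simp add: PS)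
    ultimately have "(\<lambda>n. p + I n) \<longlonglongrightarrow> \<gamma> t" by simp
    moreover have "(\<lambda>n. p + I n) \<longlonglongrightarrow> p + J" by (intro tendsto_intros IJ)
    ultimately have "\<gamma> t = p + J" by (rule LIMSEQ_unique)
    then show ?thesis using J by (simp add: integral_unique)
  qed
  show ?thesis
  proof (intro exI conjI allI impI)
    show "\<gamma> 0 = p" using inteq[of 0] by simp
    fix t :: real assume t: "0 \<le> t"
    have "((\<lambda>u. p + integral {0..u} (\<lambda>s. f (\<gamma> s))) has_vector_derivative f (\<gamma> t)) (at t within {0..t+1})"
      using integral_has_vector_derivative[OF gfcont[of "t+1"], of t] t
      by (auto intro!: derivative_eq_intros)
    then have "(\<gamma> has_vector_derivative f (\<gamma> t)) (at t within {0..t+1})"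
      by (rule has_vector_derivative_transform_within[where d=1]) (use t inteq in auto)
    moreover have "at t within {0..} = at t within {0..t+1}"
      by (rule at_within_nhd[where S="{..<t+1}"]) auto
    ultimately show "(\<gamma> has_vector_derivative f (\<gamma> t)) (at t within {0..})" by simp
  qed
qed

type_synonym st = "real \<times> real \<times> real"

definition cl :: "real \<Rightarrow> real \<Rightarrow> real" where "cl R z = max (-R) (min R z)"

definition Hf :: "real \<Rightarrow> st \<Rightarrow> st" where
  "Hf a s = (fst s * (fst (snd s) / 2 - \<bar>snd (snd s)\<bar>),
             a * fst (snd s) * (fst (snd s) / 2 - \<bar>snd (snd s)\<bar>),
             snd (snd s) * \<bar>snd (snd s)\<bar> * (fst (snd s) - \<bar>snd (snd s)\<bar>))"

definition clp :: "real \<Rightarrow> st \<Rightarrow> st" where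
  "clp R s = (cl R (fst s), cl R (fst (snd s)), cl R (snd (snd s)))"

definition Hc :: "real \<Rightarrow> real \<Rightarrow> st \<Rightarrow> st" where "Hc a R s = Hf a (clp R s)"

definition inbox :: "real \<Rightarrow> st \<Rightarrow> bool" where
  "inbox R s \<longleftrightarrow> \<bar>fst s\<bar> \<le> R \<and> \<bar>fst (snd s)\<bar> \<le> R \<and> \<bar>snd (snd s)\<bar> \<le> R"

definition KL :: "real \<Rightarrow> real" where "KL R = 3 * (6 * R + 5 * R^2)"

lemma cl_id: "\<bar>z\<bar> \<le> R \<Longrightarrow> cl R z = z" by (auto simp: cl_def)
lemma cl_bound: "0 \<le> R \<Longrightarrow> \<bar>cl R z\<bar> \<le> R" by (auto simp: cl_def)
lemma cl_lip: "0 \<le> R \<Longrightarrow> \<bar>cl R u - cl R v\<bar> \<le> \<bar>u - v\<bar>" by (auto simp: cl_def)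

lemma clp_id: "inbox R s \<Longrightarrow> clp R s = s"
  by (auto simp: clp_def inbox_def cl_id)
lemma clp_inbox: "0 \<le> R \<Longrightarrow> inbox R (clp R s)"
  by (auto simp: clp_def inbox_def cl_bound)

lemma norm_st_le: "norm (s :: st) \<le> \<bar>fst s\<bar> + \<bar>fst (snd s)\<bar> + \<bar>snd (snd s)\<bar>"
proof -
  obtain x w y where s: "s = (x, w, y)" by (cases s) auto
  have "norm (x, w, y) \<le> norm x + norm (w, y)" by (rule norm_Pair_le)
  also have "norm (w, y) \<le> norm w + norm y" by (rule norm_Pair_le)
  finally show ?thesis by (simp add: s)
qed

lemma comp_le_norm: "\<bar>fst (s :: st)\<bar> \<le> norm s" "\<bar>fst (snd s)\<bar> \<le> norm s" "\<bar>snd (snd s)\<bar> \<le> norm s"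
proof -
  obtain x w y where s: "s = (x, w, y)" by (cases s) auto
  have "norm (w, y) \<le> norm (x, w, y)" by (rule norm_snd_le)
  moreover have "norm w \<le> norm (w, y)" "norm y \<le> norm (w, y)" by (rule norm_fst_le, rule norm_snd_le)
  moreover have "norm x \<le> norm (x, w, y)" by (rule norm_fst_le)
  ultimately show "\<bar>fst s\<bar> \<le> norm s" "\<bar>fst (snd s)\<bar> \<le> norm s" "\<bar>snd (snd s)\<bar> \<le> norm s"
    by (auto simp: s)
qed

lemma clp_lip: "0 \<le> R \<Longrightarrow> norm (clp R u - clp R v) \<le> norm (u - v)"
proof -
  assume R: "0 \<le> R"
  obtain x1 w1 y1 where u: "u = (x1, w1, y1)" by (cases u) auto
  obtain x2 w2 y2 where v: "v = (x2, w2, y2)" by (cases v) auto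
  have a: "(cl R x1 - cl R x2)^2 \<le> (x1 - x2)^2" "(cl R w1 - cl R w2)^2 \<le> (w1 - w2)^2"
    "(cl R y1 - cl R y2)^2 \<le> (y1 - y2)^2"
    using cl_lip[OF R] by (auto simp: abs_le_square_iff[symmetric])
  show ?thesis
    unfolding u v clp_def using a by (simp add: norm_Pair)
qed

lemma prod_diff_bound:
  fixes x1 x2 g1 g2 :: real
  shows "\<bar>x1 * g1 - x2 * g2\<bar> \<le> \<bar>x1\<bar> * \<bar>g1 - g2\<bar> + \<bar>x1 - x2\<bar> * \<bar>g2\<bar>"
proof -
  have "x1 * g1 - x2 * g2 = x1 * (g1 - g2) + (x1 - x2) * g2" by (simp add: algebra_simps)
  then have "\<bar>x1 * g1 - x2 * g2\<bar> \<le> \<bar>x1 * (g1 - g2)\<bar> + \<bar>(x1 - x2) * g2\<bar>" by simp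
  then show ?thesis by (simp add: abs_mult)
qed

lemma Hf_lip:
  assumes a: "0 \<le> a" "a \<le> 1" and R: "0 \<le> R" and u: "inbox R u" and v: "inbox R v"
  shows "norm (Hf a u - Hf a v) \<le> KL R * norm (u - v)"
proof -
  obtain x1 w1 y1 where uu: "u = (x1, w1, y1)" by (cases u) auto
  obtain x2 w2 y2 where vv: "v = (x2, w2, y2)" by (cases v) auto
  have b: "\<bar>x1\<bar> \<le> R" "\<bar>w1\<bar> \<le> R" "\<bar>y1\<bar> \<le> R" "\<bar>x2\<bar> \<le> R" "\<bar>w2\<bar> \<le> R" "\<bar>y2\<bar> \<le> R"
    using u v by (auto simp: inbox_def uu vv)
  define S where "S = \<bar>x1 - x2\<bar> + \<bar>w1 - w2\<bar> + \<bar>y1 - y2\<bar>"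
  have S0: "0 \<le> S" by (simp add: S_def)
  define g1 where "g1 = w1 / 2 - \<bar>y1\<bar>"
  define g2 where "g2 = w2 / 2 - \<bar>y2\<bar>"
  have g2b: "\<bar>g2\<bar> \<le> 2 * R" using b by (simp add: g2_def abs_le_iff) linarith
  have gd: "\<bar>g1 - g2\<bar> \<le> S" unfolding g1_def g2_def S_def
    by (simp add: abs_le_iff) linarith
  have c1: "\<bar>x1 * g1 - x2 * g2\<bar> \<le> 3 * R * S"
  proof -
    have "\<bar>x1 * g1 - x2 * g2\<bar> \<le> \<bar>x1\<bar> * \<bar>g1 - g2\<bar> + \<bar>x1 - x2\<bar> * \<bar>g2\<bar>" by (rule prod_diff_bound)
    also have "\<dots> \<le> R * S + S * (2 * R)"
      using b(1) gd g2b S0 R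
      by (intro add_mono mult_mono) (auto simp: S_def)
    finally show ?thesis by (simp add: algebra_simps)
  qed
  have c2: "\<bar>w1 * g1 - w2 * g2\<bar> \<le> 3 * R * S"
  proof -
    have "\<bar>w1 * g1 - w2 * g2\<bar> \<le> \<bar>w1\<bar> * \<bar>g1 - g2\<bar> + \<bar>w1 - w2\<bar> * \<bar>g2\<bar>" by (rule prod_diff_bound)
    also have "\<dots> \<le> R * S + S * (2 * R)"
      using b(2) gd g2b S0 R
      by (intro add_mono mult_mono) (auto simp: S_def)
    finally show ?thesis by (simp add: algebra_simps)
  qed
  have c2': "\<bar>a * w1 * g1 - a * w2 * g2\<bar> \<le> 3 * R * S"
  proof -
    have "\<bar>a * w1 * g1 - a * w2 * g2\<bar> = a * \<bar>w1 * g1 - w2 * g2\<bar>"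
      using a by (simp add: abs_mult right_diff_distrib[symmetric] mult.assoc)
    also have "\<dots> \<le> 1 * (3 * R * S)" using a c2 by (intro mult_mono) auto
    finally show ?thesis by simp
  qed
  define q1 where "q1 = y1 * \<bar>y1\<bar>"
  define q2 where "q2 = y2 * \<bar>y2\<bar>"
  define h1 where "h1 = w1 - \<bar>y1\<bar>"
  define h2 where "h2 = w2 - \<bar>y2\<bar>"
  have q1b: "\<bar>q1\<bar> \<le> R * R"
  proof -
    have "\<bar>y1\<bar> * \<bar>y1\<bar> \<le> R * R" using b(3) by (intro mult_mono) auto
    then show ?thesis by (simp add: q1_def abs_mult)
  qed
  have h2b: "\<bar>h2\<bar> \<le> 2 * R" using b by (simp add: h2_def abs_le_iff) linarith
  have hd: "\<bar>h1 - h2\<bar> \<le> S" unfolding h1_def h2_def S_def by (simp add: abs_le_iff) linarith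
  have qd: "\<bar>q1 - q2\<bar> \<le> 2 * R * S"
  proof -
    have "\<bar>q1 - q2\<bar> \<le> \<bar>y1\<bar> * \<bar>\<bar>y1\<bar> - \<bar>y2\<bar>\<bar> + \<bar>y1 - y2\<bar> * \<bar>\<bar>y2\<bar>\<bar>"
      unfolding q1_def q2_def by (rule prod_diff_bound)
    also have "\<dots> \<le> R * S + S * R"
      using b R S0 by (intro add_mono mult_mono) (auto simp: S_def abs_le_iff)
    finally show ?thesis by (simp add: algebra_simps)
  qed
  have c3: "\<bar>q1 * h1 - q2 * h2\<bar> \<le> 5 * R^2 * S"
  proof -
    have "\<bar>q1 * h1 - q2 * h2\<bar> \<le> \<bar>q1\<bar> * \<bar>h1 - h2\<bar> + \<bar>q1 - q2\<bar> * \<bar>h2\<bar>" by (rule prod_diff_bound)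
    also have "\<dots> \<le> (R * R) * S + (2 * R * S) * (2 * R)"
      using q1b hd qd h2b S0 R by (intro add_mono mult_mono) auto
    finally show ?thesis by (simp add: algebra_simps power2_eq_square)
  qed
  have Sle: "S \<le> 3 * norm (u - v)"
    using comp_le_norm[of "u - v"] by (simp add: S_def uu vv)
  have "norm (Hf a u - Hf a v) \<le> \<bar>x1 * g1 - x2 * g2\<bar> + \<bar>a * w1 * g1 - a * w2 * g2\<bar> + \<bar>q1 * h1 - q2 * h2\<bar>"
    using norm_st_le[of "Hf a u - Hf a v"]
    by (simp add: Hf_def uu vv g1_def g2_def q1_def q2_def h1_def h2_def mult.assoc)
  also have "\<dots> \<le> 3 * R * S + 3 * R * S + 5 * R^2 * S" using c1 c2' c3 by linarith
  also have "\<dots> = (6 * R + 5 * R^2) * S" by (simp add: algebra_simps)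
  also have "\<dots> \<le> (6 * R + 5 * R^2) * (3 * norm (u - v))"
    using Sle R by (intro mult_left_mono) auto
  also have "\<dots> = KL R * norm (u - v)" by (simp add: KL_def)
  finally show ?thesis .
qed

lemma KL_nonneg: "0 \<le> R \<Longrightarrow> 0 \<le> KL R" by (simp add: KL_def)

lemma Hc_lip:
  assumes a: "0 \<le> a" "a \<le> 1" and R: "0 \<le> R"
  shows "norm (Hc a R u - Hc a R v) \<le> KL R * norm (u - v)"
proof -
  have "norm (Hc a R u - Hc a R v) \<le> KL R * norm (clp R u - clp R v)"
    unfolding Hc_def by (rule Hf_lip[OF a R clp_inbox[OF R] clp_inbox[OF R]])
  also have "\<dots> \<le> KL R * norm (u - v)"
    by (intro mult_left_mono clp_lip R KL_nonneg)
  finally show ?thesis .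
qed

lemma Hc_eq: "inbox R s \<Longrightarrow> Hc a R s = Hf a s" by (simp add: Hc_def clp_id)

definition psi :: "real \<Rightarrow> real \<Rightarrow> st \<Rightarrow> real \<Rightarrow> st" where
  "psi a R q = (SOME \<gamma>. \<gamma> 0 = q \<and> (\<forall>t\<ge>0. (\<gamma> has_vector_derivative Hc a R (\<gamma> t)) (at t within {0..})))"

lemma psi_sol:
  assumes a: "0 \<le> a" "a \<le> 1" and R: "0 \<le> R"
  shows "psi a R q 0 = q" "\<And>t. 0 \<le> t \<Longrightarrow> (psi a R q has_vector_derivative Hc a R (psi a R q t)) (at t within {0..})"
proof -
  have "\<exists>\<gamma>. \<gamma> 0 = q \<and> (\<forall>t\<ge>0. (\<gamma> has_vector_derivative Hc a R (\<gamma> t)) (at t within {0..}))"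
    by (rule picard_exists[OF KL_nonneg[OF R] Hc_lip[OF a R]])
  then have "psi a R q 0 = q \<and> (\<forall>t\<ge>0. (psi a R q has_vector_derivative Hc a R (psi a R q t)) (at t within {0..}))"
    unfolding psi_def by (rule someI_ex)
  then show "psi a R q 0 = q" "\<And>t. 0 \<le> t \<Longrightarrow> (psi a R q has_vector_derivative Hc a R (psi a R q t)) (at t within {0..})"
    by auto
qed

lemma psi_sol_T:
  assumes a: "0 \<le> a" "a \<le> 1" and R: "0 \<le> R" and t: "t \<in> {0..T}"
  shows "(psi a R q has_vector_derivative Hc a R (psi a R q t)) (at t within {0..T})"
  using psi_sol(2)[OF a R, of t q] t
  by (rule_tac has_vector_derivative_within_subset) auto

lemma psi_dep:
  assumes a: "0 \<le> a" "a \<le> 1" and R: "0 \<le> R" and t: "0 \<le> t"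
  shows "norm (psi a R q t - psi a R q' t) \<le> norm (q - q') * exp (KL R * t)"
proof -
  have "norm (psi a R q t - psi a R q' t) \<le> norm (psi a R q 0 - psi a R q' 0) * exp (KL R * t)"
    by (rule gronwall_sol[where S=UNIV and T=t and f="Hc a R"])
      (use KL_nonneg[OF R] Hc_lip[OF a R] psi_sol_T[OF a R] t in auto)
  then show ?thesis by (simp add: psi_sol(1)[OF a R])
qed

lemma psi_unique:
  assumes a: "0 \<le> a" "a \<le> 1" and R: "0 \<le> R"
    and d: "\<And>t. t \<in> {0..T} \<Longrightarrow> (\<gamma> has_vector_derivative Hc a R (\<gamma> t)) (at t within {0..T})"
    and t: "t \<in> {0..T}"
  shows "\<gamma> t = psi a R (\<gamma> 0) t"
proof -
  have "norm (\<gamma> t - psi a R (\<gamma> 0) t) \<le> norm (\<gamma> 0 - psi a R (\<gamma> 0) 0) * exp (KL R * t)"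
    by (rule gronwall_sol[where S=UNIV and T=T and f="Hc a R"])
      (use KL_nonneg[OF R] Hc_lip[OF a R] psi_sol_T[OF a R] t d in auto)
  then show ?thesis by (simp add: psi_sol(1)[OF a R])
qed

lemma hvd_fst: "(\<gamma> has_vector_derivative v) F \<Longrightarrow> ((\<lambda>t. fst (\<gamma> t)) has_real_derivative fst v) F"
  unfolding has_vector_derivative_def has_field_derivative_def
  by (drule has_derivative_fst) (erule has_derivative_eq_rhs, simp add: fun_eq_iff)

lemma hvd_snd: "(\<gamma> has_vector_derivative v) F \<Longrightarrow> ((\<lambda>t. snd (\<gamma> t)) has_vector_derivative snd v) F"
  unfolding has_vector_derivative_def
  by (drule has_derivative_snd) simp

lemma hvd_snd_real: "(\<gamma> has_vector_derivative v) F \<Longrightarrow> ((\<lambda>t. snd (\<gamma> t)) has_real_derivative snd v) F"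
  unfolding has_vector_derivative_def has_field_derivative_def
  by (drule has_derivative_snd) (erule has_derivative_eq_rhs, simp add: fun_eq_iff)

lemma vf_fst: "fst (vf a p) = fst p * ((1/2) * \<bar>fst p\<bar> powr a - \<bar>snd p\<bar>)"
  by (simp add: vf_def Let_def)
lemma vf_snd: "snd (vf a p) = snd p * \<bar>snd p\<bar> * (\<bar>fst p\<bar> powr a - \<bar>snd p\<bar>)"
  by (simp add: vf_def Let_def)

lemma sol_onD:
  assumes "sol_on F p T \<gamma>"
  shows "0 \<le> T" "\<gamma> 0 = p" "\<And>t. t \<in> {0..T} \<Longrightarrow> (\<gamma> has_vector_derivative F (\<gamma> t)) (at t within {0..T})"
  using assms by (auto simp: sol_on_def)

lemma deriv_cont_on:
  assumes "\<And>t. t \<in> {0..T} \<Longrightarrow> (\<gamma> has_vector_derivative D t) (at t within {0..T})"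
  shows "continuous_on {0..T} \<gamma>"
  using assms by (meson continuous_on_eq_continuous_within has_vector_derivative_continuous)

lemma rderiv_cont_on:
  fixes u :: "real \<Rightarrow> real"
  assumes "\<And>t. t \<in> {0..T} \<Longrightarrow> (u has_real_derivative D t) (at t within {0..T})"
  shows "continuous_on {0..T} u"
  using assms by (meson DERIV_continuous continuous_on_eq_continuous_within)

lemma sol_cont: "sol_on F p T \<gamma> \<Longrightarrow> continuous_on {0..T} \<gamma>"
  by (rule deriv_cont_on) (rule sol_onD(3))

lemma cont_bound:
  fixes k :: "real \<Rightarrow> 'a::real_normed_vector"
  assumes "continuous_on {a..b} k"
  shows "\<exists>K. \<forall>t\<in>{a..b}. norm (k t) \<le> K"
proof -
  have "compact (k ` {a..b})" by (rule compact_continuous_image[OF assms compact_Icc])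
  then have "bounded (k ` {a..b})" by (rule compact_imp_bounded)
  then show ?thesis unfolding bounded_iff by auto
qed

lemma lin_pres:
  fixes u k :: "real \<Rightarrow> real"
  assumes d: "\<And>s. s \<in> {0..T} \<Longrightarrow> (u has_real_derivative u s * k s) (at s within {0..T})"
    and c: "continuous_on {0..T} k" and t: "t \<in> {0..T}"
  shows "u 0 = 0 \<Longrightarrow> u t = 0" "u 0 \<noteq> 0 \<Longrightarrow> u t \<noteq> 0"
proof -
  have "\<exists>K. \<forall>s\<in>{0..T}. norm (2 * k s) \<le> K"
    by (rule cont_bound) (use c in \<open>intro continuous_intros\<close>)
  then obtain K where K: "\<And>s. s \<in> {0..T} \<Longrightarrow> norm (2 * k s) \<le> K" by blast
  have hd: "((\<lambda>s. (u s)^2) has_real_derivative (u s)^2 * (2 * k s)) (at s within {0..T})" if s: "s \<in> {0..T}" for s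
    by (rule derivative_eq_intros d[OF s] refl | simp add: power2_eq_square algebra_simps)+
  have b1: "(u 0)^2 * exp (- K * t) \<le> (u t)^2" and b2: "(u t)^2 \<le> (u 0)^2 * exp (K * t)"
    using hk_bounds[where h="\<lambda>s. (u s)^2" and k="\<lambda>s. 2 * k s" and K=K and T=T, OF hd] K t by auto
  show "u 0 = 0 \<Longrightarrow> u t = 0" using b2 by simp
  show "u 0 \<noteq> 0 \<Longrightarrow> u t \<noteq> 0"
  proof
    assume "u 0 \<noteq> 0" "u t = 0"
    then have "0 < (u 0)^2 * exp (- K * t)" by simp
    with b1 \<open>u t = 0\<close> show False by simp
  qed
qed

lemma abs_powr_sq: "\<bar>x::real\<bar> powr a = (x^2) powr (a/2)"
proof (cases "x = 0")
  case True then show ?thesis by simp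
next
  case False
  then have "x^2 = \<bar>x\<bar> powr 2" using powr_realpow[of "\<bar>x\<bar>" 2] by simp
  then have "(x^2) powr (a/2) = (\<bar>x\<bar> powr 2) powr (a/2)" by simp
  also have "\<dots> = \<bar>x\<bar> powr (2 * (a/2))" by (rule powr_powr)
  finally show ?thesis by simp
qed

lemma powr_sq_deriv:
  fixes X :: "real \<Rightarrow> real"
  assumes d: "(X has_real_derivative X t * g) (at t within S)" and nz: "X t \<noteq> 0"
  shows "((\<lambda>s. \<bar>X s\<bar> powr a) has_real_derivative a * (\<bar>X t\<bar> powr a) * g) (at t within S)"
proof -
  have pos: "0 < (X t)^2" using nz by simp
  have d2: "((\<lambda>s. (X s)^2) has_real_derivative 2 * (X t)^2 * g) (at t within S)"
    by (rule derivative_eq_intros d refl | simp add: power2_eq_square algebra_simps)+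
  have D1: "((\<lambda>s. ((X s)^2) powr (a/2)) has_real_derivative
      ((a/2) * ((X t)^2) powr (a/2 - 1)) * (2 * (X t)^2 * g)) (at t within S)"
    by (rule DERIV_chain2[OF has_real_derivative_powr[OF pos] d2])
  have E: "((a/2) * ((X t)^2) powr (a/2 - 1)) * (2 * (X t)^2 * g) = a * (((X t)^2) powr (a/2)) * g"
  proof -
    have "((X t)^2) powr (a/2) = ((X t)^2) powr (a/2 - 1) * ((X t)^2) powr 1"
      by (subst powr_add[symmetric]) simp
    then show ?thesis using pos by (simp add: powr_one algebra_simps)
  qed
  from D1 have "((\<lambda>s. ((X s)^2) powr (a/2)) has_real_derivative a * (((X t)^2) powr (a/2)) * g) (at t within S)"
    unfolding E .
  then show ?thesis by (simp only: abs_powr_sq)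
qed

definition lift :: "real \<Rightarrow> (real \<Rightarrow> real \<times> real) \<Rightarrow> real \<Rightarrow> st" where
  "lift a \<gamma> s = (fst (\<gamma> s), \<bar>fst (\<gamma> s)\<bar> powr a, snd (\<gamma> s))"

lemma sol_sign:
  assumes a: "0 < a" and s: "sol_on (vf a) p T \<gamma>" and t: "t \<in> {0..T}"
  shows "fst p = 0 \<Longrightarrow> fst (\<gamma> t) = 0" "fst p \<noteq> 0 \<Longrightarrow> fst (\<gamma> t) \<noteq> 0"
    "snd p = 0 \<Longrightarrow> snd (\<gamma> t) = 0" "snd p \<noteq> 0 \<Longrightarrow> snd (\<gamma> t) \<noteq> 0"
proof -
  have c: "continuous_on {0..T} \<gamma>" by (rule sol_cont[OF s])
  have cx: "continuous_on {0..T} (\<lambda>s. fst (\<gamma> s))" "continuous_on {0..T} (\<lambda>s. snd (\<gamma> s))"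
    using c by (auto intro: continuous_intros)
  have cp: "continuous_on {0..T} (\<lambda>s. \<bar>fst (\<gamma> s)\<bar> powr a)"
    using c cx a by (intro continuous_on_powr' continuous_intros) auto
  have dx: "((\<lambda>s. fst (\<gamma> s)) has_real_derivative fst (\<gamma> s) * ((1/2) * \<bar>fst (\<gamma> s)\<bar> powr a - \<bar>snd (\<gamma> s)\<bar>)) (at s within {0..T})"
    if "s \<in> {0..T}" for s
    using hvd_fst[OF sol_onD(3)[OF s that]] by (simp add: vf_fst)
  have dy: "((\<lambda>s. snd (\<gamma> s)) has_real_derivative snd (\<gamma> s) * (\<bar>snd (\<gamma> s)\<bar> * (\<bar>fst (\<gamma> s)\<bar> powr a - \<bar>snd (\<gamma> s)\<bar>))) (at s within {0..T})"
    if "s \<in> {0..T}" for s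
    using hvd_snd_real[OF sol_onD(3)[OF s that]] by (simp add: vf_snd mult.assoc)
  have g0: "\<gamma> 0 = p" by (rule sol_onD(2)[OF s])
  have ck1: "continuous_on {0..T} (\<lambda>s. (1/2) * \<bar>fst (\<gamma> s)\<bar> powr a - \<bar>snd (\<gamma> s)\<bar>)"
    by (rule continuous_on_diff continuous_on_mult continuous_on_const cp continuous_on_rabs cx)+
  have ck2: "continuous_on {0..T} (\<lambda>s. \<bar>snd (\<gamma> s)\<bar> * (\<bar>fst (\<gamma> s)\<bar> powr a - \<bar>snd (\<gamma> s)\<bar>))"
    by (rule continuous_on_diff continuous_on_mult continuous_on_const cp continuous_on_rabs cx)+
  show "fst p = 0 \<Longrightarrow> fst (\<gamma> t) = 0" "fst p \<noteq> 0 \<Longrightarrow> fst (\<gamma> t) \<noteq> 0"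
    using lin_pres[where u="\<lambda>s. fst (\<gamma> s)", OF dx ck1 t] g0 by auto
  show "snd p = 0 \<Longrightarrow> snd (\<gamma> t) = 0" "snd p \<noteq> 0 \<Longrightarrow> snd (\<gamma> t) \<noteq> 0"
    using lin_pres[where u="\<lambda>s. snd (\<gamma> s)", OF dy ck2 t] g0 by auto
qed

lemma lift_sol:
  assumes a: "0 < a" and s: "sol_on (vf a) p T \<gamma>" and t: "t \<in> {0..T}"
  shows "(lift a \<gamma> has_vector_derivative Hf a (lift a \<gamma> t)) (at t within {0..T})"
proof -
  define x where "x s = fst (\<gamma> s)" for s
  define y where "y s = snd (\<gamma> s)" for s
  have L: "lift a \<gamma> = (\<lambda>s. (x s, \<bar>x s\<bar> powr a, y s))" by (simp add: lift_def x_def y_def fun_eq_iff)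
  have dx: "(x has_real_derivative x t * ((1/2) * \<bar>x t\<bar> powr a - \<bar>y t\<bar>)) (at t within {0..T})"
    using hvd_fst[OF sol_onD(3)[OF s t]] unfolding x_def[abs_def] y_def[abs_def] by (simp add: vf_fst)
  have dy: "(y has_real_derivative y t * \<bar>y t\<bar> * (\<bar>x t\<bar> powr a - \<bar>y t\<bar>)) (at t within {0..T})"
    using hvd_snd_real[OF sol_onD(3)[OF s t]] unfolding x_def[abs_def] y_def[abs_def] by (simp add: vf_snd)
  have dW: "((\<lambda>s. \<bar>x s\<bar> powr a) has_real_derivative a * (\<bar>x t\<bar> powr a) * ((1/2) * \<bar>x t\<bar> powr a - \<bar>y t\<bar>)) (at t within {0..T})"
  proof (cases "fst p = 0")
    case True
    then have z: "\<And>s. s \<in> {0..T} \<Longrightarrow> x s = 0" using sol_sign(1)[OF a s] by (simp add: x_def)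
    have "((\<lambda>s. 0::real) has_real_derivative 0) (at t within {0..T})" by simp
    then have "((\<lambda>s. \<bar>x s\<bar> powr a) has_real_derivative 0) (at t within {0..T})"
      by (rule has_field_derivative_transform_within[where d=1]) (use z t in auto)
    then show ?thesis using z[OF t] by simp
  next
    case False
    then have "x t \<noteq> 0" using sol_sign(2)[OF a s t] by (simp add: x_def)
    then show ?thesis by (rule powr_sq_deriv[OF dx])
  qed
  have "((\<lambda>s. (x s, \<bar>x s\<bar> powr a, y s)) has_vector_derivative
      (x t * ((1/2) * \<bar>x t\<bar> powr a - \<bar>y t\<bar>), a * (\<bar>x t\<bar> powr a) * ((1/2) * \<bar>x t\<bar> powr a - \<bar>y t\<bar>),
       y t * \<bar>y t\<bar> * (\<bar>x t\<bar> powr a - \<bar>y t\<bar>))) (at t within {0..T})"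
    using dx dW dy by (intro has_vector_derivative_Pair) (simp_all add: has_real_derivative_iff_has_vector_derivative)
  then show ?thesis unfolding L by (simp add: Hf_def)
qed

definition lift0 :: "real \<Rightarrow> real \<times> real \<Rightarrow> st" where
  "lift0 a p = (fst p, \<bar>fst p\<bar> powr a, snd p)"

lemma lift_0: "sol_on F p T \<gamma> \<Longrightarrow> lift a \<gamma> 0 = lift0 a p"
  by (simp add: lift_def lift0_def sol_onD(2))

lemma inbox_mono: "inbox R s \<Longrightarrow> R \<le> R' \<Longrightarrow> inbox R' s"
  by (auto simp: inbox_def)

lemma norm_inbox: "norm s \<le> R \<Longrightarrow> inbox R s"
  using comp_le_norm[of s] by (auto simp: inbox_def)

lemma inbox_nonneg: "inbox R s \<Longrightarrow> 0 \<le> R"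
  by (auto simp: inbox_def)

lemma sol_box:
  assumes a: "0 < a" and s: "sol_on (vf a) p T \<gamma>"
  shows "\<exists>R\<ge>0. \<forall>t\<in>{0..T}. inbox R (lift a \<gamma> t)"
proof -
  have "continuous_on {0..T} (lift a \<gamma>)"
    by (rule deriv_cont_on) (rule lift_sol[OF a s])
  then obtain K where K: "\<And>t. t \<in> {0..T} \<Longrightarrow> norm (lift a \<gamma> t) \<le> K"
    using cont_bound by blast
  show ?thesis
  proof (intro exI[of _ "max K 0"] conjI ballI)
    show "0 \<le> max K 0" by simp
    fix t assume "t \<in> {0..T}"
    then have "norm (lift a \<gamma> t) \<le> max K 0" using K by (meson max.coboundedI1)
    then show "inbox (max K 0) (lift a \<gamma> t)" by (rule norm_inbox)
  qed
qed

lemma sol_lift_psi: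
  assumes a: "0 < a" "a \<le> 1" and s: "sol_on (vf a) p T \<gamma>" and R: "0 \<le> R"
    and box: "\<And>t. t \<in> {0..T} \<Longrightarrow> inbox R (lift a \<gamma> t)" and t: "t \<in> {0..T}"
  shows "lift a \<gamma> t = psi a R (lift0 a p) t"
proof -
  have "lift a \<gamma> t = psi a R (lift a \<gamma> 0) t"
  proof (rule psi_unique[OF _ a(2) R _ t])
    show "0 \<le> a" using a by simp
    fix s assume "s \<in> {0..T}"
    then show "(lift a \<gamma> has_vector_derivative Hc a R (lift a \<gamma> s)) (at s within {0..T})"
      using lift_sol[OF a(1) s] box by (simp add: Hc_eq)
  qed
  then show ?thesis by (simp add: lift_0[OF s])
qed

lemma sol_unique:
  assumes a: "0 < a" "a \<le> 1" and s1: "sol_on (vf a) p T \<gamma>1" and s2: "sol_on (vf a) p T \<gamma>2"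
    and t: "t \<in> {0..T}"
  shows "\<gamma>1 t = \<gamma>2 t"
proof -
  obtain R1 where R1: "R1 \<ge> 0" "\<And>t. t \<in> {0..T} \<Longrightarrow> inbox R1 (lift a \<gamma>1 t)" using sol_box[OF a(1) s1] by blast
  obtain R2 where R2: "R2 \<ge> 0" "\<And>t. t \<in> {0..T} \<Longrightarrow> inbox R2 (lift a \<gamma>2 t)" using sol_box[OF a(1) s2] by blast
  define R where "R = max R1 R2"
  have "lift a \<gamma>1 t = psi a R (lift0 a p) t"
    by (rule sol_lift_psi[OF a s1]) (use t R1(1) in \<open>auto simp: R_def intro!: inbox_mono[OF R1(2)]\<close>)
  moreover have "lift a \<gamma>2 t = psi a R (lift0 a p) t"
    by (rule sol_lift_psi[OF a s2]) (use t R2(1) in \<open>auto simp: R_def intro!: inbox_mono[OF R2(2)]\<close>)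
  ultimately have "lift a \<gamma>1 t = lift a \<gamma>2 t" by simp
  then show ?thesis by (simp add: lift_def prod_eq_iff)
qed

definition phi :: "real \<Rightarrow> real \<Rightarrow> real \<times> real \<Rightarrow> real \<Rightarrow> real \<times> real" where
  "phi a R p t = (fst (psi a R (lift0 a p) t), snd (snd (psi a R (lift0 a p) t)))"

lemma sol_eq_phi:
  assumes a: "0 < a" "a \<le> 1" and s: "sol_on (vf a) p T \<gamma>" and R: "0 \<le> R"
    and box: "\<And>t. t \<in> {0..T} \<Longrightarrow> inbox R (lift a \<gamma> t)" and t: "t \<in> {0..T}"
  shows "\<gamma> t = phi a R p t"
  using sol_lift_psi[OF a s R box t] by (simp add: phi_def lift_def prod_eq_iff)

lemma genuine:
  assumes a: "0 < a" "a \<le> 1" and R: "0 \<le> R" and T: "0 \<le> T"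
    and box: "\<And>t. t \<in> {0..T} \<Longrightarrow> inbox R (psi a R (lift0 a p) t)"
  shows "sol_on (vf a) p T (phi a R p)"
    and "\<And>t. t \<in> {0..T} \<Longrightarrow> fst (snd (psi a R (lift0 a p) t)) = \<bar>fst (psi a R (lift0 a p) t)\<bar> powr a"
proof -
  define \<psi> where "\<psi> = psi a R (lift0 a p)"
  define X where "X s = fst (\<psi> s)" for s
  define W where "W s = fst (snd (\<psi> s))" for s
  define Y where "Y s = snd (snd (\<psi> s))" for s
  define g where "g s = W s / 2 - \<bar>Y s\<bar>" for s
  have a0: "0 \<le> a" using a by simp
  have d: "(\<psi> has_vector_derivative Hf a (\<psi> s)) (at s within {0..T})" if s: "s \<in> {0..T}" for s
    using psi_sol_T[OF a0 a(2) R s, of "lift0 a p"] Hc_eq[OF box[OF s]] by (simp add: \<psi>_def)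
  have c\<psi>: "continuous_on {0..T} \<psi>" by (rule deriv_cont_on) (rule d)
  have cX: "continuous_on {0..T} X" and cW: "continuous_on {0..T} W" and cY: "continuous_on {0..T} Y"
    unfolding X_def W_def Y_def using c\<psi> by (auto intro!: continuous_intros)
  have cg: "continuous_on {0..T} g" unfolding g_def using cW cY by (intro continuous_intros) auto
  have dX: "(X has_real_derivative X s * g s) (at s within {0..T})" if s: "s \<in> {0..T}" for s
    using hvd_fst[OF d[OF s]] by (simp add: X_def[abs_def] g_def W_def Y_def Hf_def)
  have dW: "(W has_real_derivative W s * (a * g s)) (at s within {0..T})" if s: "s \<in> {0..T}" for s
    using hvd_fst[OF hvd_snd[OF d[OF s]]] by (simp add: W_def[abs_def] g_def Y_def Hf_def algebra_simps)
  have dY: "(Y has_real_derivative Y s * \<bar>Y s\<bar> * (W s - \<bar>Y s\<bar>)) (at s within {0..T})" if s: "s \<in> {0..T}" for s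
    using hvd_snd_real[OF hvd_snd[OF d[OF s]]] by (simp add: Y_def[abs_def] W_def Hf_def)
  have \<psi>0: "\<psi> 0 = lift0 a p" using psi_sol(1)[OF a0 a(2) R] by (simp add: \<psi>_def)
  have cag: "continuous_on {0..T} (\<lambda>s. a * g s)" using cg by (intro continuous_intros)
  have WX: "W t = \<bar>X t\<bar> powr a" if t: "t \<in> {0..T}" for t
  proof (cases "fst p = 0")
    case True
    then have "X 0 = 0" "W 0 = 0" using \<psi>0 by (auto simp: X_def W_def lift0_def)
    then have "X t = 0" "W t = 0"
      using lin_pres(1)[OF dX cg t] lin_pres(1)[OF dW cag t] by auto
    then show ?thesis using a by simp
  next
    case False
    then have X0: "X 0 \<noteq> 0" using \<psi>0 by (auto simp: X_def lift0_def)
    have Xnz: "X s \<noteq> 0" if "s \<in> {0..T}" for s using lin_pres(2)[OF dX cg that X0] .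
    define u where "u s = W s - \<bar>X s\<bar> powr a" for s
    have du: "(u has_real_derivative u s * (a * g s)) (at s within {0..T})" if s: "s \<in> {0..T}" for s
    proof -
      have "((\<lambda>s. \<bar>X s\<bar> powr a) has_real_derivative a * (\<bar>X s\<bar> powr a) * g s) (at s within {0..T})"
        by (rule powr_sq_deriv[OF dX[OF s] Xnz[OF s]])
      then have "(u has_real_derivative W s * (a * g s) - a * (\<bar>X s\<bar> powr a) * g s) (at s within {0..T})"
        unfolding u_def[abs_def] by (intro derivative_intros dW[OF s])
      then show ?thesis by (simp add: u_def algebra_simps)
    qed
    have "u 0 = 0" using \<psi>0 by (simp add: u_def X_def W_def lift0_def)
    then have "u t = 0" using lin_pres(1)[OF du cag t] by simp
    then show ?thesis by (simp add: u_def)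
  qed
  show "\<And>t. t \<in> {0..T} \<Longrightarrow> fst (snd (psi a R (lift0 a p) t)) = \<bar>fst (psi a R (lift0 a p) t)\<bar> powr a"
    using WX by (simp add: W_def X_def \<psi>_def)
  have P: "phi a R p = (\<lambda>s. (X s, Y s))" by (simp add: phi_def X_def Y_def \<psi>_def fun_eq_iff)
  show "sol_on (vf a) p T (phi a R p)"
    unfolding sol_on_def
  proof (intro conjI ballI)
    show "0 \<le> T" by (rule T)
    show "phi a R p 0 = p" using \<psi>0 by (simp add: P X_def Y_def lift0_def)
    fix t assume t: "t \<in> {0..T}"
    have "((\<lambda>s. (X s, Y s)) has_vector_derivative (X t * g t, Y t * \<bar>Y t\<bar> * (W t - \<bar>Y t\<bar>))) (at t within {0..T})"
      using dX[OF t] dY[OF t] by (intro has_vector_derivative_Pair) (simp_all add: has_real_derivative_iff_has_vector_derivative)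
    then show "(phi a R p has_vector_derivative vf a (phi a R p t)) (at t within {0..T})"
      unfolding P using WX[OF t] by (simp add: vf_def g_def Let_def)
  qed
qed

lemma first_touch:
  fixes h :: "real \<Rightarrow> real"
  assumes c: "continuous_on {t0..T} h" and h0: "h t0 < 0"
    and touch: "\<And>t. t \<in> {t0..T} \<Longrightarrow> t0 < t \<Longrightarrow> h t = 0 \<Longrightarrow> (\<forall>s\<in>{t0..<t}. h s < 0) \<Longrightarrow> False"
    and t: "t \<in> {t0..T}"
  shows "h t < 0"
proof (rule ccontr)
  assume "\<not> h t < 0"
  then have ht: "0 \<le> h t" by simp
  define Z where "Z = {t0..t} \<inter> h -` {0..}"
  have cZ: "closed Z" unfolding Z_def
    by (rule continuous_closed_preimage) (use c t in \<open>auto intro: continuous_on_subset\<close>)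
  have tZ: "t \<in> Z" using ht t by (auto simp: Z_def)
  have bZ: "bdd_below Z" by (auto simp: Z_def bdd_below_def)
  define t1 where "t1 = Inf Z"
  have t1Z: "t1 \<in> Z" unfolding t1_def using cZ tZ bZ by (intro closed_contains_Inf) auto
  have t1le: "t1 \<le> t" unfolding t1_def using tZ bZ by (rule cInf_lower)
  have t1ge: "t0 \<le> t1" using t1Z by (auto simp: Z_def)
  have ht1: "0 \<le> h t1" using t1Z by (auto simp: Z_def)
  have below: "h s < 0" if "s \<in> {t0..<t1}" for s
  proof (rule ccontr)
    assume "\<not> h s < 0"
    then have "s \<in> Z" using that t1le by (auto simp: Z_def)
    then have "t1 \<le> s" unfolding t1_def using bZ by (rule cInf_lower)
    then show False using that by auto
  qed
  have ct1: "continuous_on {t0..t1} h" using c t t1le by (auto intro: continuous_on_subset)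
  obtain s where s: "t0 \<le> s" "s \<le> t1" "h s = 0"
    using IVT'[of h t0 0 t1, OF _ ht1 t1ge ct1] h0 by auto
  have "s = t1" using below[of s] s by force
  then have "h t1 = 0" using s by simp
  moreover have "t0 < t1" using h0 \<open>h t1 = 0\<close> t1ge by (cases "t0 = t1") auto
  ultimately show False using touch[of t1] below t1ge t1le t by auto
qed

lemma touch_deriv:
  fixes h :: "real \<Rightarrow> real"
  assumes d: "(h has_real_derivative D) (at t within {t0..T})" and tt: "t0 < t" "t \<le> T"
    and ht: "h t = 0" and below: "\<forall>s\<in>{t0..<t}. h s < 0"
  shows "0 \<le> D"
proof (rule ccontr)
  assume "\<not> 0 \<le> D"
  then have "D < 0" by simp
  from has_real_derivative_neg_dec_left[OF d this] obtain e where e: "e > 0"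
    and H: "\<And>k. k > 0 \<Longrightarrow> t - k \<in> {t0..T} \<Longrightarrow> k < e \<Longrightarrow> h t < h (t - k)" by blast
  define k where "k = min (e/2) ((t - t0)/2)"
  have k1: "k > 0" "k \<le> e/2" "k \<le> (t - t0)/2"
    using e tt min.cobounded1[of "e/2" "(t - t0)/2"] min.cobounded2[of "e/2" "(t - t0)/2"]
    unfolding k_def by auto
  have k: "k > 0" "k < e" "t - k \<in> {t0..T}" "t - k \<in> {t0..<t}" using k1 e tt by auto
  have "h t < h (t - k)" using H k by blast
  moreover have "h (t - k) < 0" using below k by blast
  ultimately show False using ht by simp
qed

lemma barrier:
  fixes h h' :: "real \<Rightarrow> real"
  assumes d: "\<And>t. t \<in> {t0..T} \<Longrightarrow> (h has_real_derivative h' t) (at t within {t0..T})"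
    and h0: "h t0 < 0"
    and neg: "\<And>t. t \<in> {t0..T} \<Longrightarrow> t0 < t \<Longrightarrow> h t = 0 \<Longrightarrow> (\<forall>s\<in>{t0..<t}. h s < 0) \<Longrightarrow> h' t < 0"
    and t: "t \<in> {t0..T}"
  shows "h t < 0"
proof -
  have c: "continuous_on {t0..T} h" using d by (meson DERIV_continuous continuous_on_eq_continuous_within)
  show ?thesis
  proof (rule first_touch[of t0 T h t, OF c h0 _ t])
  fix t assume t: "t \<in> {t0..T}" "t0 < t" "h t = 0" "\<forall>s\<in>{t0..<t}. h s < 0"
  have "0 \<le> h' t" by (rule touch_deriv[OF d[OF t(1)] t(2)]) (use t in auto)
  moreover have "h' t < 0" by (rule neg) (use t in auto)
  ultimately show False by simp
  qed
qed

lemma sol_derivs: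
  assumes a: "0 < a" and s: "sol_on (vf a) p T \<gamma>" and t: "t \<in> {0..T}"
  shows "((\<lambda>s. fst (\<gamma> s)) has_real_derivative fst (\<gamma> t) * ((1/2) * \<bar>fst (\<gamma> t)\<bar> powr a - \<bar>snd (\<gamma> t)\<bar>)) (at t within {0..T})"
    and "((\<lambda>s. snd (\<gamma> s)) has_real_derivative snd (\<gamma> t) * (\<bar>snd (\<gamma> t)\<bar> * (\<bar>fst (\<gamma> t)\<bar> powr a - \<bar>snd (\<gamma> t)\<bar>))) (at t within {0..T})"
    and "((\<lambda>s. \<bar>fst (\<gamma> s)\<bar> powr a) has_real_derivative a * \<bar>fst (\<gamma> t)\<bar> powr a * ((1/2) * \<bar>fst (\<gamma> t)\<bar> powr a - \<bar>snd (\<gamma> t)\<bar>)) (at t within {0..T})"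
    and "((\<lambda>s. (fst (\<gamma> s))^2) has_real_derivative 2 * (fst (\<gamma> t))^2 * ((1/2) * \<bar>fst (\<gamma> t)\<bar> powr a - \<bar>snd (\<gamma> t)\<bar>)) (at t within {0..T})"
    and "snd (\<gamma> t) \<noteq> 0 \<Longrightarrow> ((\<lambda>s. \<bar>snd (\<gamma> s)\<bar>) has_real_derivative \<bar>snd (\<gamma> t)\<bar> * (\<bar>snd (\<gamma> t)\<bar> * (\<bar>fst (\<gamma> t)\<bar> powr a - \<bar>snd (\<gamma> t)\<bar>))) (at t within {0..T})"
proof -
  show dx: "((\<lambda>s. fst (\<gamma> s)) has_real_derivative fst (\<gamma> t) * ((1/2) * \<bar>fst (\<gamma> t)\<bar> powr a - \<bar>snd (\<gamma> t)\<bar>)) (at t within {0..T})"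
    using hvd_fst[OF sol_onD(3)[OF s t]] by (simp add: vf_fst)
  show dy: "((\<lambda>s. snd (\<gamma> s)) has_real_derivative snd (\<gamma> t) * (\<bar>snd (\<gamma> t)\<bar> * (\<bar>fst (\<gamma> t)\<bar> powr a - \<bar>snd (\<gamma> t)\<bar>))) (at t within {0..T})"
    using hvd_snd_real[OF sol_onD(3)[OF s t]] by (simp add: vf_snd mult.assoc)
  have "((\<lambda>s. fst (snd (lift a \<gamma> s))) has_real_derivative fst (snd (Hf a (lift a \<gamma> t)))) (at t within {0..T})"
    by (rule hvd_fst[OF hvd_snd[OF lift_sol[OF a s t]]])
  then show "((\<lambda>s. \<bar>fst (\<gamma> s)\<bar> powr a) has_real_derivative a * \<bar>fst (\<gamma> t)\<bar> powr a * ((1/2) * \<bar>fst (\<gamma> t)\<bar> powr a - \<bar>snd (\<gamma> t)\<bar>)) (at t within {0..T})"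
    by (simp add: lift_def Hf_def)
  show "((\<lambda>s. (fst (\<gamma> s))^2) has_real_derivative 2 * (fst (\<gamma> t))^2 * ((1/2) * \<bar>fst (\<gamma> t)\<bar> powr a - \<bar>snd (\<gamma> t)\<bar>)) (at t within {0..T})"
    by (rule derivative_eq_intros dx refl | simp add: power2_eq_square algebra_simps)+
  assume "snd (\<gamma> t) \<noteq> 0"
  from powr_sq_deriv[OF dy this, of 1]
  show "((\<lambda>s. \<bar>snd (\<gamma> s)\<bar>) has_real_derivative \<bar>snd (\<gamma> t)\<bar> * (\<bar>snd (\<gamma> t)\<bar> * (\<bar>fst (\<gamma> t)\<bar> powr a - \<bar>snd (\<gamma> t)\<bar>))) (at t within {0..T})"
    by simp
qed

lemma within_sub:
  "(f has_real_derivative D) (at t within {0..T}) \<Longrightarrow> 0 \<le> t0 \<Longrightarrow> (f has_real_derivative D) (at t within {t0..T})"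
  by (rule DERIV_subset) auto

definition inA :: "real \<Rightarrow> real \<times> real \<Rightarrow> bool" where
  "inA a p \<longleftrightarrow> (1/2) * \<bar>fst p\<bar> powr a < \<bar>snd p\<bar>"

definition cA :: "real \<Rightarrow> real \<times> real \<Rightarrow> real" where
  "cA a p = (if \<bar>fst p\<bar> powr a = 0 then 3/4 else min (3/4) ((1/2 + \<bar>snd p\<bar> / \<bar>fst p\<bar> powr a) / 2))"

lemma cA_props:
  assumes "inA a p"
  shows "1/2 < cA a p" "cA a p < 1" "cA a p * \<bar>fst p\<bar> powr a < \<bar>snd p\<bar>"
proof -
  define m where "m = \<bar>fst p\<bar> powr a"
  have m0: "0 \<le> m" by (simp add: m_def)
  have A: "(1/2) * m < \<bar>snd p\<bar>" using assms by (simp add: inA_def m_def)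
  show "1/2 < cA a p" "cA a p < 1"
  proof -
    show "1/2 < cA a p"
    proof (cases "m = 0")
      case False
      define r where "r = \<bar>snd p\<bar> / m"
      have "1/2 < r" using A m0 False by (simp add: field_simps r_def)
      then have "1/2 < min (3/4) ((1/2 + r) / 2)" by (simp add: min_def)
      then show ?thesis using False by (simp add: cA_def m_def[symmetric] r_def)
    qed (simp add: cA_def m_def[symmetric])
    show "cA a p < 1" by (auto simp: cA_def m_def[symmetric])
  qed
  show "cA a p * \<bar>fst p\<bar> powr a < \<bar>snd p\<bar>"
  proof (cases "m = 0")
    case True then show ?thesis using A by (simp add: cA_def m_def[symmetric])
  next
    case False
    then have mp: "0 < m" using m0 by simp
    have q: "1/2 < \<bar>snd p\<bar> / m" using A mp by (simp add: field_simps)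
    have e: "cA a p = min (3/4) ((1/2 + \<bar>snd p\<bar> / m) / 2)" using False by (simp add: cA_def m_def[symmetric])
    have "cA a p \<le> (1/2 + \<bar>snd p\<bar> / m) / 2" unfolding e by (rule min.cobounded2)
    also have "\<dots> < \<bar>snd p\<bar> / m" using q by simp
    finally have "cA a p * m < \<bar>snd p\<bar> / m * m" using mp by (intro mult_strict_right_mono) auto
    then show ?thesis using mp by (simp add: m_def[symmetric])
  qed
qed

lemma A_invariant:
  assumes a: "0 < a" and s: "sol_on (vf a) p T \<gamma>" and pA: "inA a p" and t: "t \<in> {0..T}"
  shows "cA a p * \<bar>fst (\<gamma> t)\<bar> powr a < \<bar>snd (\<gamma> t)\<bar>"
proof -
  define c where "c = cA a p"
  have c: "1/2 < c" "c < 1" "c * \<bar>fst p\<bar> powr a < \<bar>snd p\<bar>" using cA_props[OF pA] by (auto simp: c_def)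
  have "0 \<le> c * \<bar>fst p\<bar> powr a" using c(1) by simp
  then have y0: "snd p \<noteq> 0" using c(3) by auto
  note sS = s
  have ynz: "snd (\<gamma> s) \<noteq> 0" if "s \<in> {0..T}" for s using sol_sign(4)[OF a sS that y0] .
  define m where "m s = \<bar>fst (\<gamma> s)\<bar> powr a" for s
  define v where "v s = \<bar>snd (\<gamma> s)\<bar>" for s
  define h where "h s = c * m s - v s" for s
  define h' where "h' s = c * (a * m s * ((1/2) * m s - v s)) - v s * (v s * (m s - v s))" for s
  have d: "(h has_real_derivative h' s) (at s within {0..T})" if s: "s \<in> {0..T}" for s
  proof -
    have "((\<lambda>s. c * m s - v s) has_real_derivative c * (a * m s * ((1/2) * m s - v s)) - v s * (v s * (m s - v s))) (at s within {0..T})"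
      unfolding m_def v_def
      by (rule DERIV_diff[OF DERIV_cmult[OF sol_derivs(3)[OF a sS s]] sol_derivs(5)[OF a sS s ynz[OF s]]])
    then show ?thesis by (simp add: h_def[abs_def] h'_def)
  qed
  have "h t < 0"
  proof (rule barrier[OF d _ _ t])
    show "h 0 < 0" using c(3) sol_onD(2)[OF s] by (simp add: h_def m_def v_def)
    fix t assume t: "t \<in> {0..T}" "0 < t" "h t = 0" "\<forall>s\<in>{0..<t}. h s < 0"
    have vt: "v t = c * m t" using t(3) by (simp add: h_def)
    have vpos: "0 < v t" using ynz[OF t(1)] by (simp add: v_def)
    have "0 \<le> m t" by (simp add: m_def)
    then have mpos: "0 < m t" using vt c vpos by (cases "m t = 0") auto
    have "h' t = c * (m t)^2 * (a * (1/2 - c) - c * (1 - c) * m t)"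
      unfolding h'_def vt by (simp add: algebra_simps power2_eq_square)
    moreover have "a * (1/2 - c) - c * (1 - c) * m t < 0"
    proof -
      have "a * (1/2 - c) < 0" using a c by (simp add: mult_pos_neg)
      moreover have "0 < c * (1 - c) * m t" using c mpos by simp
      ultimately show ?thesis by linarith
    qed
    moreover have "0 < c * (m t)^2" using c mpos by simp
    ultimately show "h' t < 0" by (simp add: mult_pos_neg)
  qed
  then show ?thesis by (simp add: h_def m_def v_def c_def)
qed

lemma complete_sol_on: "complete_sol F p \<gamma> \<Longrightarrow> 0 \<le> T \<Longrightarrow> sol_on F p T \<gamma>"
  unfolding complete_sol_def sol_on_def
proof (intro conjI ballI)
  assume H: "\<gamma> 0 = p \<and> (\<forall>t\<ge>0. (\<gamma> has_vector_derivative F (\<gamma> t)) (at t within {0..}))" "0 \<le> T"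
  then show "0 \<le> T" "\<gamma> 0 = p" by auto
  fix t assume t: "t \<in> {0..T}"
  then have "(\<gamma> has_vector_derivative F (\<gamma> t)) (at t within {0..})" using H by auto
  then show "(\<gamma> has_vector_derivative F (\<gamma> t)) (at t within {0..T})"
    by (rule has_vector_derivative_within_subset) auto
qed

lemma A_gneg:
  assumes a: "0 < a" and s: "sol_on (vf a) p T \<gamma>" and pA: "inA a p" and t: "t \<in> {0..T}"
  shows "(1/2) * \<bar>fst (\<gamma> t)\<bar> powr a - \<bar>snd (\<gamma> t)\<bar> \<le> (1/2 - cA a p) * \<bar>fst (\<gamma> t)\<bar> powr a"
  using A_invariant[OF a s pA t] by (simp add: algebra_simps)

lemma A_xmono:
  assumes a: "0 < a" and s: "sol_on (vf a) p T \<gamma>" and pA: "inA a p" and st: "0 \<le> t1" "t1 \<le> t2" "t2 \<le> T"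
  shows "(fst (\<gamma> t2))^2 \<le> (fst (\<gamma> t1))^2"
proof (rule deriv_nonpos_antimono[OF sol_derivs(4)[OF a s] _ st])
  fix t assume t: "t \<in> {0..T}"
  have "(1/2 - cA a p) * \<bar>fst (\<gamma> t)\<bar> powr a \<le> 0"
    using cA_props(1)[OF pA] by (simp add: mult_nonpos_nonneg)
  then have "(1/2) * \<bar>fst (\<gamma> t)\<bar> powr a - \<bar>snd (\<gamma> t)\<bar> \<le> 0" using A_gneg[OF a s pA t] by linarith
  then show "2 * (fst (\<gamma> t))\<^sup>2 * (1 / 2 * \<bar>fst (\<gamma> t)\<bar> powr a - \<bar>snd (\<gamma> t)\<bar>) \<le> 0"
    by (simp add: mult_nonneg_nonpos)
qed

lemma A_xbound:
  assumes a: "0 < a" and s: "sol_on (vf a) p T \<gamma>" and pA: "inA a p" and t: "t \<in> {0..T}"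
  shows "\<bar>fst (\<gamma> t)\<bar> \<le> \<bar>fst p\<bar>" "\<bar>fst (\<gamma> t)\<bar> powr a \<le> \<bar>fst p\<bar> powr a"
proof -
  have "(fst (\<gamma> t))^2 \<le> (fst (\<gamma> 0))^2" by (rule A_xmono[OF a s pA]) (use t in auto)
  then show x: "\<bar>fst (\<gamma> t)\<bar> \<le> \<bar>fst p\<bar>" using sol_onD(2)[OF s] by (simp add: abs_le_square_iff)
  show "\<bar>fst (\<gamma> t)\<bar> powr a \<le> \<bar>fst p\<bar> powr a" using a x by (intro powr_mono2) auto
qed

lemma y_barrier:
  assumes a: "0 < a" and s: "sol_on (vf a) p T \<gamma>" and y0: "snd p \<noteq> 0" and B: "0 < B"
    and t0: "t0 \<in> {0..T}" and yt0: "\<bar>snd (\<gamma> t0)\<bar> < B"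
    and mB: "\<And>t. t \<in> {t0..T} \<Longrightarrow> \<bar>fst (\<gamma> t)\<bar> powr a < B" and t: "t \<in> {t0..T}"
  shows "\<bar>snd (\<gamma> t)\<bar> < B"
proof -
  have ynz: "snd (\<gamma> s) \<noteq> 0" if "s \<in> {0..T}" for s using sol_sign(4)[OF a s that y0] .
  define h where "h s = \<bar>snd (\<gamma> s)\<bar> - B" for s
  have "h t < 0"
  proof (rule barrier[where h'="\<lambda>s. \<bar>snd (\<gamma> s)\<bar> * (\<bar>snd (\<gamma> s)\<bar> * (\<bar>fst (\<gamma> s)\<bar> powr a - \<bar>snd (\<gamma> s)\<bar>))", OF _ _ _ t])
    fix s assume ss: "s \<in> {t0..T}"
    then have s0: "s \<in> {0..T}" using t0 by auto
    have "((\<lambda>s. \<bar>snd (\<gamma> s)\<bar> - B) has_real_derivative \<bar>snd (\<gamma> s)\<bar> * (\<bar>snd (\<gamma> s)\<bar> * (\<bar>fst (\<gamma> s)\<bar> powr a - \<bar>snd (\<gamma> s)\<bar>))) (at s within {t0..T})"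
      using within_sub[OF sol_derivs(5)[OF a s s0 ynz[OF s0]]] t0 by (auto intro!: derivative_eq_intros)
    then show "(h has_real_derivative \<bar>snd (\<gamma> s)\<bar> * (\<bar>snd (\<gamma> s)\<bar> * (\<bar>fst (\<gamma> s)\<bar> powr a - \<bar>snd (\<gamma> s)\<bar>))) (at s within {t0..T})"
      by (simp add: h_def[abs_def])
  next
    show "h t0 < 0" using yt0 by (simp add: h_def)
  next
    fix s assume ss: "s \<in> {t0..T}" "t0 < s" "h s = 0" "\<forall>u\<in>{t0..<s}. h u < 0"
    then have ys: "\<bar>snd (\<gamma> s)\<bar> = B" by (simp add: h_def)
    have "\<bar>fst (\<gamma> s)\<bar> powr a - B < 0" using mB[OF ss(1)] by simp
    then show "\<bar>snd (\<gamma> s)\<bar> * (\<bar>snd (\<gamma> s)\<bar> * (\<bar>fst (\<gamma> s)\<bar> powr a - \<bar>snd (\<gamma> s)\<bar>)) < 0"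
      unfolding ys using B by (simp add: mult_pos_neg)
  qed
  then show ?thesis by (simp add: h_def)
qed

lemma inA_y0: "inA a p \<Longrightarrow> snd p \<noteq> 0"
proof -
  assume "inA a p"
  moreover have "0 \<le> (1/2) * \<bar>fst p\<bar> powr a" by simp
  ultimately show ?thesis unfolding inA_def by auto
qed

lemma A_ybound:
  assumes a: "0 < a" and s: "sol_on (vf a) p T \<gamma>" and pA: "inA a p" and t: "t \<in> {0..T}"
  shows "\<bar>snd (\<gamma> t)\<bar> \<le> max \<bar>snd p\<bar> (\<bar>fst p\<bar> powr a)"
proof (rule ccontr)
  define B where "B = max \<bar>snd p\<bar> (\<bar>fst p\<bar> powr a)"
  assume "\<not> \<bar>snd (\<gamma> t)\<bar> \<le> max \<bar>snd p\<bar> (\<bar>fst p\<bar> powr a)"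
  then have lt: "B < \<bar>snd (\<gamma> t)\<bar>" unfolding B_def by linarith
  define B' where "B' = (B + \<bar>snd (\<gamma> t)\<bar>) / 2"
  have B0: "0 \<le> B" by (simp add: B_def)
  have "\<bar>snd (\<gamma> t)\<bar> < B'"
  proof (rule y_barrier[OF a s inA_y0[OF pA]])
    show "0 < B'" using lt B0 by (simp add: B'_def)
    show "0 \<in> {0..T}" using t by auto
    have "\<bar>snd p\<bar> \<le> B" by (simp add: B_def)
    then show "\<bar>snd (\<gamma> 0)\<bar> < B'" using sol_onD(2)[OF s] lt by (simp add: B'_def)
    fix u assume u: "u \<in> {0..T}"
    have "\<bar>fst (\<gamma> u)\<bar> powr a \<le> \<bar>fst p\<bar> powr a" by (rule A_xbound(2)[OF a s pA u])
    moreover have "\<bar>fst p\<bar> powr a \<le> B" by (simp add: B_def)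
    ultimately show "\<bar>fst (\<gamma> u)\<bar> powr a < B'" using lt by (simp add: B'_def)
  qed (use t in auto)
  then show False using lt by (simp add: B'_def)
qed

lemma A_xsmall:
  assumes a: "0 < a" and c: "complete_sol (vf a) p \<gamma>" and pA: "inA a p" and e: "0 < \<epsilon>"
  shows "\<exists>t1\<ge>0. \<forall>t\<ge>t1. \<bar>fst (\<gamma> t)\<bar> < \<epsilon>"
proof -
  define cc where "cc = cA a p"
  have cc: "1/2 < cc" using cA_props(1)[OF pA] by (simp add: cc_def)
  define k where "k = 2 * (cc - 1/2) * \<epsilon>^2 * \<epsilon> powr a"
  have k: "0 < k" using cc e by (simp add: k_def)
  have ex: "\<exists>t1\<ge>0. \<bar>fst (\<gamma> t1)\<bar> < \<epsilon>"
  proof (rule ccontr)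
    assume "\<not> (\<exists>t1\<ge>0. \<bar>fst (\<gamma> t1)\<bar> < \<epsilon>)"
    then have big: "\<And>t. 0 \<le> t \<Longrightarrow> \<epsilon> \<le> \<bar>fst (\<gamma> t)\<bar>" by force
    define T where "T = (fst p)^2 / k + 1"
    have T: "0 \<le> T" using k by (simp add: T_def)
    have s: "sol_on (vf a) p T \<gamma>" by (rule complete_sol_on[OF c T])
    have "(fst (\<gamma> T))^2 + k * T \<le> (fst (\<gamma> 0))^2 + k * 0"
    proof (rule deriv_nonpos_antimono[where f="\<lambda>t. (fst (\<gamma> t))^2 + k * t" and a=0 and b=T])
      fix t assume t: "t \<in> {0..T}"
      show "((\<lambda>t. (fst (\<gamma> t))^2 + k * t) has_real_derivative
          2 * (fst (\<gamma> t))^2 * ((1/2) * \<bar>fst (\<gamma> t)\<bar> powr a - \<bar>snd (\<gamma> t)\<bar>) + k) (at t within {0..T})"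
        by (rule derivative_eq_intros sol_derivs(4)[OF a s t] refl | simp)+
      have x2: "\<epsilon>^2 \<le> (fst (\<gamma> t))^2" using big[of t] t e by (simp add: abs_le_square_iff[symmetric])
      have mm: "\<epsilon> powr a \<le> \<bar>fst (\<gamma> t)\<bar> powr a" using big[of t] t e a by (intro powr_mono2) auto
      have "\<epsilon>^2 * \<epsilon> powr a \<le> (fst (\<gamma> t))^2 * \<bar>fst (\<gamma> t)\<bar> powr a"
        using x2 mm by (intro mult_mono) auto
      then have "2 * (cc - 1/2) * (\<epsilon>^2 * \<epsilon> powr a) \<le> 2 * (cc - 1/2) * ((fst (\<gamma> t))^2 * \<bar>fst (\<gamma> t)\<bar> powr a)"
        using cc by (intro mult_left_mono) auto
      moreover have "2 * (fst (\<gamma> t))^2 * ((1/2) * \<bar>fst (\<gamma> t)\<bar> powr a - \<bar>snd (\<gamma> t)\<bar>)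
          \<le> 2 * (fst (\<gamma> t))^2 * ((1/2 - cc) * \<bar>fst (\<gamma> t)\<bar> powr a)"
        using A_gneg[OF a s pA t] by (intro mult_left_mono) (auto simp: cc_def)
      ultimately show "2 * (fst (\<gamma> t))^2 * ((1/2) * \<bar>fst (\<gamma> t)\<bar> powr a - \<bar>snd (\<gamma> t)\<bar>) + k \<le> 0"
        by (simp add: k_def algebra_simps)
    qed (use T in auto)
    then have "(fst (\<gamma> T))^2 + k * T \<le> (fst p)^2" using sol_onD(2)[OF s] by simp
    then have "k * T \<le> (fst p)^2" using zero_le_power2[of "fst (\<gamma> T)"] by linarith
    moreover have "k * T = (fst p)^2 + k" using k by (simp add: T_def field_simps)
    ultimately show False using k by simp
  qed
  then obtain t1 where t1: "0 \<le> t1" "\<bar>fst (\<gamma> t1)\<bar> < \<epsilon>" by blast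
  have "\<bar>fst (\<gamma> t)\<bar> < \<epsilon>" if t: "t1 \<le> t" for t
  proof -
    have tt: "0 \<le> t" using t t1 by simp
    have "(fst (\<gamma> t))^2 \<le> (fst (\<gamma> t1))^2"
      by (rule A_xmono[OF a complete_sol_on[OF c tt] pA]) (use t t1 in auto)
    then have "\<bar>fst (\<gamma> t)\<bar> \<le> \<bar>fst (\<gamma> t1)\<bar>" by (simp add: abs_le_square_iff)
    then show ?thesis using t1 by simp
  qed
  then show ?thesis using t1 by blast
qed

lemma A_ysmall:
  assumes a: "0 < a" and c: "complete_sol (vf a) p \<gamma>" and pA: "inA a p" and e: "0 < \<epsilon>"
  shows "\<exists>t2\<ge>0. \<forall>t\<ge>t2. \<bar>snd (\<gamma> t)\<bar> < \<epsilon>"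
proof -
  define e1 where "e1 = (\<epsilon>/2) powr (1/a)"
  have e1: "0 < e1" using e by (simp add: e1_def)
  have e1a: "e1 powr a = \<epsilon>/2" using a e by (simp add: e1_def powr_powr)
  obtain t1 where t1: "0 \<le> t1" "\<And>t. t1 \<le> t \<Longrightarrow> \<bar>fst (\<gamma> t)\<bar> < e1"
    using A_xsmall[OF a c pA e1] by blast
  have msmall: "\<bar>fst (\<gamma> t)\<bar> powr a < \<epsilon>/2" if "t1 \<le> t" for t
  proof -
    have "\<bar>fst (\<gamma> t)\<bar> powr a < e1 powr a" using t1(2)[OF that] a by (intro powr_less_mono2) auto
    then show ?thesis using e1a by simp
  qed
  have y0: "snd p \<noteq> 0" by (rule inA_y0[OF pA])
  have ex: "\<exists>t2\<ge>t1. \<bar>snd (\<gamma> t2)\<bar> < \<epsilon>"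
  proof (rule ccontr)
    assume "\<not> (\<exists>t2\<ge>t1. \<bar>snd (\<gamma> t2)\<bar> < \<epsilon>)"
    then have big: "\<And>t. t1 \<le> t \<Longrightarrow> \<epsilon> \<le> \<bar>snd (\<gamma> t)\<bar>" by force
    define k where "k = \<epsilon>^3 / 2"
    have k: "0 < k" using e by (simp add: k_def)
    define T where "T = t1 + \<bar>snd (\<gamma> t1)\<bar> / k + 1"
    have T: "0 \<le> T" "t1 \<le> T" using k t1 by (auto simp: T_def)
    have s: "sol_on (vf a) p T \<gamma>" by (rule complete_sol_on[OF c T(1)])
    have "\<bar>snd (\<gamma> T)\<bar> + k * T \<le> \<bar>snd (\<gamma> t1)\<bar> + k * t1"
    proof (rule deriv_nonpos_antimono[where f="\<lambda>t. \<bar>snd (\<gamma> t)\<bar> + k * t" and a=t1 and b=T])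
      fix t assume t: "t \<in> {t1..T}"
      then have t0: "t \<in> {0..T}" using t1 by auto
      have ynz: "snd (\<gamma> t) \<noteq> 0" by (rule sol_sign(4)[OF a s t0 y0])
      show "((\<lambda>t. \<bar>snd (\<gamma> t)\<bar> + k * t) has_real_derivative
          \<bar>snd (\<gamma> t)\<bar> * (\<bar>snd (\<gamma> t)\<bar> * (\<bar>fst (\<gamma> t)\<bar> powr a - \<bar>snd (\<gamma> t)\<bar>)) + k) (at t within {t1..T})"
        using within_sub[OF sol_derivs(5)[OF a s t0 ynz] t1(1)]
        by (auto intro!: derivative_eq_intros)
      have yb: "\<epsilon> \<le> \<bar>snd (\<gamma> t)\<bar>" using big t by auto
      have mt: "\<bar>fst (\<gamma> t)\<bar> powr a < \<epsilon>/2" using msmall t by auto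
      have neg: "\<bar>fst (\<gamma> t)\<bar> powr a - \<bar>snd (\<gamma> t)\<bar> \<le> - (\<epsilon>/2)" using yb mt by linarith
      have y2: "\<epsilon> * \<epsilon> \<le> \<bar>snd (\<gamma> t)\<bar> * \<bar>snd (\<gamma> t)\<bar>" using yb e by (intro mult_mono) auto
      have "\<bar>snd (\<gamma> t)\<bar> * (\<bar>snd (\<gamma> t)\<bar> * (\<bar>fst (\<gamma> t)\<bar> powr a - \<bar>snd (\<gamma> t)\<bar>))
          = (\<bar>snd (\<gamma> t)\<bar> * \<bar>snd (\<gamma> t)\<bar>) * (\<bar>fst (\<gamma> t)\<bar> powr a - \<bar>snd (\<gamma> t)\<bar>)" by simp
      also have "\<dots> \<le> (\<epsilon> * \<epsilon>) * (\<bar>fst (\<gamma> t)\<bar> powr a - \<bar>snd (\<gamma> t)\<bar>)"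
        using y2 neg e by (intro mult_right_mono_neg) auto
      also have "\<dots> \<le> (\<epsilon> * \<epsilon>) * (- (\<epsilon>/2))" using neg e by (intro mult_left_mono) auto
      also have "\<dots> = - k" by (simp add: k_def power3_eq_cube)
      finally show "\<bar>snd (\<gamma> t)\<bar> * (\<bar>snd (\<gamma> t)\<bar> * (\<bar>fst (\<gamma> t)\<bar> powr a - \<bar>snd (\<gamma> t)\<bar>)) + k \<le> 0" by simp
    qed (use T in auto)
    moreover have "k * T = k * t1 + \<bar>snd (\<gamma> t1)\<bar> + k" using k by (simp add: T_def field_simps)
    ultimately show False using k by simp
  qed
  then obtain t2 where t2: "t1 \<le> t2" "\<bar>snd (\<gamma> t2)\<bar> < \<epsilon>" by blast
  have "\<bar>snd (\<gamma> t)\<bar> < \<epsilon>" if t: "t2 \<le> t" for t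
  proof (rule y_barrier[OF a complete_sol_on[OF c] y0 e, of t t2])
    show "0 \<le> t" using t t1 t2 by auto
    show "t2 \<in> {0..t}" using t t1 t2 by auto
    show "\<bar>snd (\<gamma> t2)\<bar> < \<epsilon>" by (rule t2(2))
    fix u assume "u \<in> {t2..t}"
    then have "\<bar>fst (\<gamma> u)\<bar> powr a < \<epsilon>/2" using msmall t2 by auto
    then show "\<bar>fst (\<gamma> u)\<bar> powr a < \<epsilon>" using e by simp
  qed (use t in auto)
  then show ?thesis using t1 t2 by (intro exI[of _ t2]) auto
qed

lemma A_conv:
  assumes a: "0 < a" and c: "complete_sol (vf a) p \<gamma>" and pA: "inA a p"
  shows "(\<gamma> \<longlongrightarrow> 0) at_top"
proof -
  have x: "((\<lambda>t. fst (\<gamma> t)) \<longlongrightarrow> 0) at_top"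
    unfolding tendsto_iff
  proof (intro allI impI)
    fix e :: real assume "0 < e"
    then obtain t1 where "\<forall>t\<ge>t1. \<bar>fst (\<gamma> t)\<bar> < e" using A_xsmall[OF a c pA] by blast
    then show "\<forall>\<^sub>F t in at_top. dist (fst (\<gamma> t)) 0 < e"
      unfolding eventually_at_top_linorder by auto
  qed
  have y: "((\<lambda>t. snd (\<gamma> t)) \<longlongrightarrow> 0) at_top"
    unfolding tendsto_iff
  proof (intro allI impI)
    fix e :: real assume "0 < e"
    then obtain t1 where "\<forall>t\<ge>t1. \<bar>snd (\<gamma> t)\<bar> < e" using A_ysmall[OF a c pA] by blast
    then show "\<forall>\<^sub>F t in at_top. dist (snd (\<gamma> t)) 0 < e"
      unfolding eventually_at_top_linorder by auto
  qed
  have "((\<lambda>t. (fst (\<gamma> t), snd (\<gamma> t))) \<longlongrightarrow> (0, 0)) at_top" by (rule tendsto_Pair[OF x y])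
  then show ?thesis by (simp add: zero_prod_def)
qed

lemma omega_sub:
  assumes "(\<gamma> \<longlongrightarrow> 0) at_top"
  shows "omega_limit \<gamma> \<subseteq> {0}"
proof
  fix q assume "q \<in> omega_limit \<gamma>"
  then obtain s :: "nat \<Rightarrow> real" where s: "filterlim s at_top sequentially" "(\<gamma> \<circ> s) \<longlonglongrightarrow> q"
    by (auto simp: omega_limit_def)
  have "(\<gamma> \<circ> s) \<longlonglongrightarrow> 0" unfolding comp_def by (rule filterlim_compose[OF assms s(1)])
  then have "q = 0" using s(2) by (rule LIMSEQ_unique[rotated])
  then show "q \<in> {0}" by simp
qed

lemma at_within_Icc_ge: "0 \<le> (t::real) \<Longrightarrow> at t within {0..} = at t within {0..t+1}"
  by (rule at_within_nhd[where S="{..<t+1}"]) auto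

lemma genuine_complete:
  assumes a: "0 < a" "a \<le> 1" and R: "0 \<le> R"
    and box: "\<And>t. 0 \<le> t \<Longrightarrow> inbox R (psi a R (lift0 a p) t)"
  shows "complete_sol (vf a) p (phi a R p)"
  unfolding complete_sol_def
proof (intro conjI allI impI)
  have s0: "sol_on (vf a) p 0 (phi a R p)" by (rule genuine(1)[OF a R]) (use box in auto)
  show "phi a R p 0 = p" by (rule sol_onD(2)[OF s0])
  fix t :: real assume t: "0 \<le> t"
  have s: "sol_on (vf a) p (t+1) (phi a R p)" by (rule genuine(1)[OF a R]) (use box t in auto)
  have "(phi a R p has_vector_derivative vf a (phi a R p t)) (at t within {0..t+1})"
    by (rule sol_onD(3)[OF s]) (use t in auto)
  then show "(phi a R p has_vector_derivative vf a (phi a R p t)) (at t within {0..})"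
    by (simp add: at_within_Icc_ge[OF t])
qed

lemma sol_restrict:
  assumes s: "sol_on F p T \<gamma>" and T': "0 \<le> T'" "T' \<le> T"
  shows "sol_on F p T' \<gamma>"
  unfolding sol_on_def
proof (intro conjI ballI)
  show "0 \<le> T'" "\<gamma> 0 = p" using T' sol_onD(2)[OF s] by auto
  fix t assume t: "t \<in> {0..T'}"
  have "(\<gamma> has_vector_derivative F (\<gamma> t)) (at t within {0..T})" by (rule sol_onD(3)[OF s]) (use t T' in auto)
  then show "(\<gamma> has_vector_derivative F (\<gamma> t)) (at t within {0..T'})"
    by (rule has_vector_derivative_within_subset) (use T' in auto)
qed

lemma sol_shift:
  assumes s: "sol_on F p T \<gamma>" and t1: "0 \<le> t1" "t1 \<le> T"
  shows "sol_on F (\<gamma> t1) (T - t1) (\<lambda>s. \<gamma> (t1 + s))"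
  unfolding sol_on_def
proof (intro conjI ballI)
  show "0 \<le> T - t1" using t1 by simp
  show "\<gamma> (t1 + 0) = \<gamma> t1" by simp
  fix s assume ss: "s \<in> {0..T - t1}"
  have d1: "((\<lambda>s. t1 + s) has_vector_derivative 1) (at s within {0..T - t1})"
    by (auto intro!: derivative_eq_intros)
  have "(\<gamma> has_vector_derivative F (\<gamma> (t1 + s))) (at (t1 + s) within {0..T})"
    by (rule sol_onD(3)[OF s]) (use ss t1 in auto)
  then have d2: "(\<gamma> has_vector_derivative F (\<gamma> (t1 + s))) (at (t1 + s) within (\<lambda>s. t1 + s) ` {0..T - t1})"
    by (rule has_vector_derivative_within_subset) (use t1 in auto)
  from vector_diff_chain_within[OF d1 d2]
  show "((\<lambda>s. \<gamma> (t1 + s)) has_vector_derivative F (\<gamma> (t1 + s))) (at s within {0..T - t1})"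
    by (simp add: comp_def)
qed

lemma complete_shift:
  assumes c: "complete_sol F p \<gamma>" and t1: "0 \<le> t1"
  shows "complete_sol F (\<gamma> t1) (\<lambda>s. \<gamma> (t1 + s))"
  unfolding complete_sol_def
proof (intro conjI allI impI)
  show "\<gamma> (t1 + 0) = \<gamma> t1" by simp
  fix s :: real assume ss: "0 \<le> s"
  have d1: "((\<lambda>s. t1 + s) has_vector_derivative 1) (at s within {0..})"
    by (auto intro!: derivative_eq_intros)
  have "(\<gamma> has_vector_derivative F (\<gamma> (t1 + s))) (at (t1 + s) within {0..})"
    using c ss t1 by (auto simp: complete_sol_def)
  then have d2: "(\<gamma> has_vector_derivative F (\<gamma> (t1 + s))) (at (t1 + s) within (\<lambda>s. t1 + s) ` {0..})"
    by (rule has_vector_derivative_within_subset) (use t1 in auto)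
  from vector_diff_chain_within[OF d1 d2]
  show "((\<lambda>s. \<gamma> (t1 + s)) has_vector_derivative F (\<gamma> (t1 + s))) (at s within {0..})"
    by (simp add: comp_def)
qed

definition bnd :: "real \<Rightarrow> real \<times> real \<Rightarrow> real" where
  "bnd a r = \<bar>fst r\<bar> + max \<bar>snd r\<bar> (\<bar>fst r\<bar> powr a)"

lemma norm_pt_le: "norm (z :: real \<times> real) \<le> \<bar>fst z\<bar> + \<bar>snd z\<bar>"
  using norm_Pair_le[of "fst z" "snd z"] by simp

lemma A_norm_bound:
  assumes a: "0 < a" and s: "sol_on (vf a) p T \<gamma>" and pA: "inA a p" and t: "t \<in> {0..T}"
  shows "norm (\<gamma> t) \<le> bnd a p" "\<bar>fst (\<gamma> t)\<bar> \<le> bnd a p" "\<bar>snd (\<gamma> t)\<bar> \<le> bnd a p"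
    "\<bar>fst (\<gamma> t)\<bar> powr a \<le> bnd a p"
proof -
  have x: "\<bar>fst (\<gamma> t)\<bar> \<le> \<bar>fst p\<bar>" "\<bar>fst (\<gamma> t)\<bar> powr a \<le> \<bar>fst p\<bar> powr a"
    using A_xbound[OF a s pA t] by auto
  have y: "\<bar>snd (\<gamma> t)\<bar> \<le> max \<bar>snd p\<bar> (\<bar>fst p\<bar> powr a)" by (rule A_ybound[OF a s pA t])
  have "norm (\<gamma> t) \<le> \<bar>fst (\<gamma> t)\<bar> + \<bar>snd (\<gamma> t)\<bar>" by (rule norm_pt_le)
  then show "norm (\<gamma> t) \<le> bnd a p" using x y by (simp add: bnd_def)
  show "\<bar>fst (\<gamma> t)\<bar> \<le> bnd a p" using x by (simp add: bnd_def)
  show "\<bar>snd (\<gamma> t)\<bar> \<le> bnd a p" using y by (simp add: bnd_def)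
  show "\<bar>fst (\<gamma> t)\<bar> powr a \<le> bnd a p" using x by (simp add: bnd_def)
qed

definition maxc :: "st \<Rightarrow> real" where
  "maxc s = max \<bar>fst s\<bar> (max \<bar>fst (snd s)\<bar> \<bar>snd (snd s)\<bar>)"

lemma maxc_inbox: "maxc s \<le> R \<Longrightarrow> inbox R s"
  by (auto simp: maxc_def inbox_def)

lemma cont_maxc: "continuous_on S f \<Longrightarrow> continuous_on S (\<lambda>t. maxc (f t))"
  unfolding maxc_def by (intro continuous_intros)

lemma psi_cont: "0 \<le> a \<Longrightarrow> a \<le> 1 \<Longrightarrow> 0 \<le> R \<Longrightarrow> continuous_on {0..T} (psi a R q)"
  by (rule deriv_cont_on) (rule psi_sol_T)

lemma box_forever:
  assumes a: "0 < a" "a \<le> 1" and R: "0 \<le> R"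
    and start: "maxc (lift0 a p) < R"
    and step: "\<And>t. 0 < t \<Longrightarrow> sol_on (vf a) p t (phi a R p) \<Longrightarrow>
        (\<And>s. s \<in> {0..t} \<Longrightarrow> fst (snd (psi a R (lift0 a p) s)) = \<bar>fst (psi a R (lift0 a p) s)\<bar> powr a) \<Longrightarrow>
        maxc (psi a R (lift0 a p) t) < R"
    and t: "0 \<le> t"
  shows "inbox R (psi a R (lift0 a p) t)"
proof -
  define h where "h s = maxc (psi a R (lift0 a p) s) - R" for s
  have "h t < 0"
  proof (rule first_touch[of 0 t h t])
    show "continuous_on {0..t} h" unfolding h_def using psi_cont[of a R t "lift0 a p"] a R
      by (intro continuous_intros cont_maxc) auto
    show "h 0 < 0" using start psi_sol(1)[of a R] a R by (simp add: h_def)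
    show "t \<in> {0..t}" using t by simp
    fix u assume u: "u \<in> {0..t}" "0 < u" "h u = 0" "\<forall>s\<in>{0..<u}. h s < 0"
    have bx: "inbox R (psi a R (lift0 a p) s)" if "s \<in> {0..u}" for s
    proof (cases "s = u")
      case True then show ?thesis using u(3) by (intro maxc_inbox) (simp add: h_def)
    next
      case False
      then have "s \<in> {0..<u}" using that by auto
      then have "h s < 0" using u(4) by blast
      then show ?thesis by (intro maxc_inbox) (simp add: h_def)
    qed
    have so: "sol_on (vf a) p u (phi a R p)" by (rule genuine(1)[OF a R _ bx]) (use u in auto)
    have "maxc (psi a R (lift0 a p) u) < R"
      by (rule step[OF u(2) so]) (rule genuine(2)[OF a R _ bx], use u in auto)
    then show False using u(3) by (simp add: h_def)
  qed
  then show ?thesis by (intro maxc_inbox) (simp add: h_def)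
qed

lemma maxc_lift0: "maxc (lift0 a p) \<le> bnd a p"
  by (auto simp: maxc_def lift0_def bnd_def)

lemma A_exists:
  assumes a: "0 < a" "a \<le> 1" and pA: "inA a p"
  shows "complete_sol (vf a) p (phi a (bnd a p + 1) p)"
proof (rule genuine_complete[OF a])
  show R: "0 \<le> bnd a p + 1" by (simp add: bnd_def)
  fix t :: real assume t: "0 \<le> t"
  show "inbox (bnd a p + 1) (psi a (bnd a p + 1) (lift0 a p) t)"
  proof (rule box_forever[OF a R _ _ t])
    show "maxc (lift0 a p) < bnd a p + 1" using maxc_lift0[of a p] by simp
    fix u assume u: "0 < u" and so: "sol_on (vf a) p u (phi a (bnd a p + 1) p)"
      and W: "\<And>s. s \<in> {0..u} \<Longrightarrow> fst (snd (psi a (bnd a p + 1) (lift0 a p) s)) = \<bar>fst (psi a (bnd a p + 1) (lift0 a p) s)\<bar> powr a"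
    have uu: "u \<in> {0..u}" using u by simp
    have b: "\<bar>fst (phi a (bnd a p + 1) p u)\<bar> \<le> bnd a p" "\<bar>snd (phi a (bnd a p + 1) p u)\<bar> \<le> bnd a p"
      "\<bar>fst (phi a (bnd a p + 1) p u)\<bar> powr a \<le> bnd a p"
      using A_norm_bound[OF a(1) so pA uu] by auto
    show "maxc (psi a (bnd a p + 1) (lift0 a p) u) < bnd a p + 1"
      using b W[OF uu] by (simp add: maxc_def phi_def)
  qed
qed

lemma A_local_basin:
  assumes a: "0 < a" "a \<le> 1" and pA: "inA a p" and d: "bnd a p < \<delta>"
  shows "p \<in> local_basin (vf a) {0} \<delta>"
  unfolding local_basin_def basin_def attracted_def stays_in_def
proof (intro CollectI conjI allI impI ballI)
  show "\<exists>\<gamma>. complete_sol (vf a) p \<gamma>" using A_exists[OF a pA] by blast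
  fix \<gamma> assume "complete_sol (vf a) p \<gamma>"
  then show "omega_limit \<gamma> \<subseteq> {0}" by (intro omega_sub A_conv[OF a(1) _ pA])
next
  fix T \<gamma> t assume s: "sol_on (vf a) p T \<gamma>" and t: "t \<in> {0..T}"
  have "norm (\<gamma> t) \<le> bnd a p" by (rule A_norm_bound(1)[OF a(1) s pA t])
  then show "\<gamma> t \<in> nbhd {0} \<delta>" using d by (simp add: nbhd_def)
qed

lemma Bl_escape:
  assumes a: "0 < a" and c: "complete_sol (vf a) p \<gamma>" and x0: "fst p \<noteq> 0"
    and y0: "(snd p)^2 < (1/16) * (\<bar>fst p\<bar> powr a)^2"
    and d: "0 < \<delta>" "\<delta> powr a \<le> a" and stay: "\<And>t. 0 \<le> t \<Longrightarrow> norm (\<gamma> t) < \<delta>"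
  shows False
proof -
  define m where "m t = \<bar>fst (\<gamma> t)\<bar> powr a" for t
  have xnz: "fst (\<gamma> t) \<noteq> 0" if "0 \<le> t" for t
    using sol_sign(2)[OF a complete_sol_on[OF c that] _ x0] that by auto
  have mpos: "0 < m t" if "0 \<le> t" for t using xnz[OF that] by (simp add: m_def)
  have msmall: "m t < a" if "0 \<le> t" for t
  proof -
    have "\<bar>fst (\<gamma> t)\<bar> \<le> norm (\<gamma> t)" by (metis norm_fst_le prod.collapse real_norm_def)
    then have "\<bar>fst (\<gamma> t)\<bar> < \<delta>" using stay[OF that] by simp
    then have "m t < \<delta> powr a" unfolding m_def using a by (intro powr_less_mono2) auto
    then show ?thesis using d by simp
  qed
  have inv: "(snd (\<gamma> t))^2 < (1/16) * (m t)^2" if T: "0 \<le> T" and t: "t \<in> {0..T}" for T t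
  proof -
    have s: "sol_on (vf a) p T \<gamma>" by (rule complete_sol_on[OF c T])
    define h where "h s = (snd (\<gamma> s))^2 - (1/16) * (m s)^2" for s
    define h' where "h' s = 2 * snd (\<gamma> s) * (snd (\<gamma> s) * (\<bar>snd (\<gamma> s)\<bar> * (m s - \<bar>snd (\<gamma> s)\<bar>)))
       - (1/16) * (2 * m s * (a * m s * ((1/2) * m s - \<bar>snd (\<gamma> s)\<bar>)))" for s
    have "h t < 0"
    proof (rule barrier[OF _ _ _ t])
      fix s assume ss: "s \<in> {0..T}"
      have "((\<lambda>s. (snd (\<gamma> s))^2 - (1/16) * (\<bar>fst (\<gamma> s)\<bar> powr a)^2) has_real_derivative h' s) (at s within {0..T})"
        unfolding h'_def m_def
        by (rule derivative_eq_intros sol_derivs(2)[OF a s ss] sol_derivs(3)[OF a s ss] refl | simp)+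
      then show "(h has_real_derivative h' s) (at s within {0..T})" by (simp add: h_def[abs_def] m_def)
    next
      show "h 0 < 0" using y0 sol_onD(2)[OF s] by (simp add: h_def m_def)
    next
      fix s assume ss: "s \<in> {0..T}" "0 < s" "h s = 0" "\<forall>u\<in>{0..<s}. h u < 0"
      have ms: "0 < m s" "m s < a" using mpos[of s] msmall[of s] ss by auto
      have "(snd (\<gamma> s))^2 = (m s / 4)^2" using ss(3) by (simp add: h_def power_divide)
      then have ys: "\<bar>snd (\<gamma> s)\<bar> = m s / 4" using ms
        by (metis abs_of_nonneg less_imp_le power2_abs power2_eq_iff_nonneg zero_le_divide_iff abs_ge_zero zero_le_numeral)
      have "h' s = (m s)^3 / 128 * (3 * m s - 4 * a)"
        unfolding h'_def
      proof -
        have "snd (\<gamma> s) * snd (\<gamma> s) = (m s / 4)^2" using ys by (metis abs_mult_self_eq power2_eq_square)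
        then show "2 * snd (\<gamma> s) * (snd (\<gamma> s) * (\<bar>snd (\<gamma> s)\<bar> * (m s - \<bar>snd (\<gamma> s)\<bar>))) -
            1 / 16 * (2 * m s * (a * m s * (1 / 2 * m s - \<bar>snd (\<gamma> s)\<bar>))) = (m s)^3 / 128 * (3 * m s - 4 * a)"
          unfolding ys by (simp add: algebra_simps power2_eq_square power3_eq_cube)
      qed
      moreover have "(m s)^3 / 128 * (3 * m s - 4 * a) < 0" using ms a
        by (intro mult_pos_neg) auto
      ultimately show "h' s < 0" by simp
    qed
    then show ?thesis by (simp add: h_def)
  qed
  have ysm: "\<bar>snd (\<gamma> t)\<bar> < m t / 4" if "0 \<le> t" for t
  proof -
    have X: "(\<bar>snd (\<gamma> t)\<bar>)^2 < (m t / 4)^2" using inv[of t t] that by (simp add: power_divide)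
    have "0 \<le> m t / 4" using mpos[OF that] by simp
    then show ?thesis by (rule power_less_imp_less_base[OF X])
  qed
  define k where "k = (1/2) * ((fst p)^2 * (\<bar>fst p\<bar> powr a))"
  have k: "0 < k" using x0 by (simp add: k_def)
  define T where "T = \<delta>^2 / k + 1"
  have T: "0 \<le> T" using k by (simp add: T_def)
  have s: "sol_on (vf a) p T \<gamma>" by (rule complete_sol_on[OF c T])
  have dx: "((\<lambda>t. (fst (\<gamma> t))^2) has_real_derivative 2 * (fst (\<gamma> t))^2 * ((1/2) * \<bar>fst (\<gamma> t)\<bar> powr a - \<bar>snd (\<gamma> t)\<bar>)) (at t within {0..T})"
    if "t \<in> {0..T}" for t by (rule sol_derivs(4)[OF a s that])
  have gpos: "(1/4) * m t \<le> (1/2) * \<bar>fst (\<gamma> t)\<bar> powr a - \<bar>snd (\<gamma> t)\<bar>" if "0 \<le> t" for t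
    using ysm[OF that] by (simp add: m_def)
  have xmono: "(fst (\<gamma> 0))^2 \<le> (fst (\<gamma> t))^2" if "t \<in> {0..T}" for t
  proof (rule deriv_nonneg_mono[OF dx])
    fix u assume u: "u \<in> {0..T}"
    have "0 \<le> (1/4) * m u" using mpos[of u] u by simp
    then show "0 \<le> 2 * (fst (\<gamma> u))^2 * ((1/2) * \<bar>fst (\<gamma> u)\<bar> powr a - \<bar>snd (\<gamma> u)\<bar>)"
      using gpos[of u] u by (intro mult_nonneg_nonneg) auto
  qed (use that in auto)
  have "(fst (\<gamma> 0))^2 - k * 0 \<le> (fst (\<gamma> T))^2 - k * T"
  proof (rule deriv_nonneg_mono[where f="\<lambda>t. (fst (\<gamma> t))^2 - k * t" and a=0 and b=T])
    fix u assume u: "u \<in> {0..T}"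
    show "((\<lambda>t. (fst (\<gamma> t))^2 - k * t) has_real_derivative
        2 * (fst (\<gamma> u))^2 * ((1/2) * \<bar>fst (\<gamma> u)\<bar> powr a - \<bar>snd (\<gamma> u)\<bar>) - k) (at u within {0..T})"
      by (rule derivative_eq_intros dx[OF u] refl | simp)+
    have x2: "(fst p)^2 \<le> (fst (\<gamma> u))^2" using xmono[OF u] sol_onD(2)[OF s] by simp
    then have "\<bar>fst p\<bar> \<le> \<bar>fst (\<gamma> u)\<bar>" by (simp add: abs_le_square_iff)
    then have m0: "\<bar>fst p\<bar> powr a \<le> m u" unfolding m_def using a by (intro powr_mono2) auto
    have P: "(fst p)^2 * (\<bar>fst p\<bar> powr a) \<le> (fst (\<gamma> u))^2 * m u" using x2 m0 by (intro mult_mono) auto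
    have "k \<le> (1/2) * ((fst (\<gamma> u))^2 * m u)" unfolding k_def using P by simp
    also have "\<dots> = 2 * (fst (\<gamma> u))^2 * ((1/4) * m u)" by simp
    finally have "k \<le> 2 * (fst (\<gamma> u))^2 * ((1/4) * m u)" .
    also have "\<dots> \<le> 2 * (fst (\<gamma> u))^2 * ((1/2) * \<bar>fst (\<gamma> u)\<bar> powr a - \<bar>snd (\<gamma> u)\<bar>)"
      using gpos[of u] u by (intro mult_left_mono) auto
    finally show "0 \<le> 2 * (fst (\<gamma> u))^2 * ((1/2) * \<bar>fst (\<gamma> u)\<bar> powr a - \<bar>snd (\<gamma> u)\<bar>) - k" by simp
  qed (use T in auto)
  then have "(fst p)^2 + k * T \<le> (fst (\<gamma> T))^2" using sol_onD(2)[OF s] by simp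
  moreover have "(fst (\<gamma> T))^2 < \<delta>^2"
  proof -
    have "\<bar>fst (\<gamma> T)\<bar> \<le> norm (\<gamma> T)" by (metis norm_fst_le prod.collapse real_norm_def)
    then have "\<bar>fst (\<gamma> T)\<bar> < \<delta>" using stay[OF T] by simp
    then have "\<bar>fst (\<gamma> T)\<bar>^2 < \<delta>^2" by (rule power_strict_mono) auto
    then show ?thesis by simp
  qed
  moreover have "k * T = \<delta>^2 + k" using k by (simp add: T_def field_simps)
  ultimately show False using k by (smt (verit) zero_le_power2)
qed

lemma cont_mpow: "0 < a \<Longrightarrow> continuous_on UNIV (\<lambda>p::real\<times>real. \<bar>fst p\<bar> powr a)"
  by (intro continuous_on_powr' continuous_intros) auto

definition Bad :: "real \<Rightarrow> (real \<times> real) set" where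
  "Bad a = {p. fst p \<noteq> 0 \<and> (snd p)^2 < (1/16) * (\<bar>fst p\<bar> powr a)^2}"

lemma Bad_open: "0 < a \<Longrightarrow> open (Bad a)"
proof -
  assume a: "0 < a"
  have "Bad a = {p. fst p \<noteq> 0} \<inter> {p::real\<times>real. (snd p)^2 < (1/16) * (\<bar>fst p\<bar> powr a)^2}"
    by (auto simp: Bad_def)
  moreover have "open {p::real\<times>real. fst p \<noteq> 0}"
    by (rule open_Collect_neq) (intro continuous_intros)+
  moreover have "open {p::real\<times>real. (snd p)^2 < (1/16) * (\<bar>fst p\<bar> powr a)^2}"
    by (rule open_Collect_less) (intro continuous_intros cont_mpow[OF a])+
  ultimately show ?thesis by auto
qed

lemma nbhd0: "nbhd {0} e = ball 0 e"
  by (auto simp: nbhd_def ball_def dist_commute)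

lemma open_leb: "open S \<Longrightarrow> S \<in> sets lebesgue"
  by (rule sets_completionI_sets) (simp add: borel_open)

lemma nonBad_box:
  assumes a: "0 < a" and e: "0 < \<epsilon>"
  shows "ball 0 \<epsilon> - Bad a \<subseteq> cbox (- ((4*\<epsilon>) powr (1/a)), - \<epsilon>) ((4*\<epsilon>) powr (1/a), \<epsilon>)"
proof
  fix p :: "real \<times> real" assume p: "p \<in> ball 0 \<epsilon> - Bad a"
  obtain x y where xy: "p = (x, y)" by (cases p) auto
  define b where "b = (4*\<epsilon>) powr (1/a)"
  have n: "norm p < \<epsilon>" using p by simp
  have yb: "\<bar>y\<bar> < \<epsilon>" using norm_snd_le[of y x] n by (simp add: xy)
  have xb: "\<bar>x\<bar> \<le> b"
  proof (cases "x = 0")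
    case True then show ?thesis by (simp add: b_def)
  next
    case False
    then have "\<not> y^2 < (1/16) * (\<bar>x\<bar> powr a)^2" using p by (simp add: Bad_def xy)
    then have "(\<bar>x\<bar> powr a / 4)^2 \<le> y^2" by (simp add: power_divide)
    then have "\<bar>\<bar>x\<bar> powr a / 4\<bar> \<le> \<bar>y\<bar>" by (simp only: abs_le_square_iff)
    then have "\<bar>x\<bar> powr a < 4 * \<epsilon>" using yb by simp
    then have "(\<bar>x\<bar> powr a) powr (1/a) < (4*\<epsilon>) powr (1/a)" using a by (intro powr_less_mono2) auto
    moreover have "(\<bar>x\<bar> powr a) powr (1/a) = \<bar>x\<bar>" using a by (simp add: powr_powr)
    ultimately show ?thesis by (simp add: b_def)
  qed
  show "p \<in> cbox (- ((4*\<epsilon>) powr (1/a)), - \<epsilon>) ((4*\<epsilon>) powr (1/a), \<epsilon>)"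
    using xb yb unfolding xy cbox_Pair_eq b_def by (auto simp: abs_le_iff)
qed

lemma measure_nonBad:
  assumes a: "0 < a" and e: "0 < \<epsilon>"
  shows "measure lebesgue (ball 0 \<epsilon> - Bad a) \<le> 4 * \<epsilon> * (4*\<epsilon>) powr (1/a)"
proof -
  define b where "b = (4*\<epsilon>) powr (1/a)"
  have b: "0 \<le> b" by (simp add: b_def)
  have "measure lebesgue (ball 0 \<epsilon> - Bad a) \<le> measure lebesgue (cbox (- b, - \<epsilon>) (b, \<epsilon>))"
  proof (rule measure_mono_fmeasurable)
    show "ball 0 \<epsilon> - Bad a \<subseteq> cbox (- b, - \<epsilon>) (b, \<epsilon>)" using nonBad_box[OF a e] by (simp add: b_def)
    have "ball 0 \<epsilon> - Bad a = ball 0 \<epsilon> \<inter> - Bad a" by auto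
    moreover have "ball (0::real\<times>real) \<epsilon> \<inter> - Bad a \<in> sets lebesgue"
      by (intro sets.Int open_leb open_ball sets_completionI_sets) (simp add: borel_closed Bad_open[OF a] closed_def)
    ultimately show "ball 0 \<epsilon> - Bad a \<in> sets lebesgue" by simp
    show "cbox (- b, - \<epsilon>) (b, \<epsilon>) \<in> lmeasurable" by simp
  qed
  also have "measure lebesgue (cbox (- b, - \<epsilon>) (b, \<epsilon>)) = measure lborel (cbox (- b, - \<epsilon>) (b, \<epsilon>))"
    by simp
  also have "\<dots> = (2 * b) * (2 * \<epsilon>)"
    unfolding Henstock_Kurzweil_Integration.content_Pair using b e by (simp add: cbox_interval Henstock_Kurzweil_Integration.content_real)
  finally show ?thesis by (simp add: b_def algebra_simps)
qed

lemma measure_ball2: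
  assumes "0 < \<epsilon>"
  shows "measure lebesgue (ball (0::real\<times>real) \<epsilon>) = unit_ball_vol 2 * \<epsilon>^2"
proof -
  have "measure lebesgue (ball (0::real\<times>real) \<epsilon>) = measure lborel (ball (0::real\<times>real) \<epsilon>)" by simp
  also have "\<dots> = unit_ball_vol 2 * \<epsilon>^2" using content_ball[of \<epsilon> "0::real\<times>real"] assms by (simp add: power2_eq_square)
  finally show ?thesis .
qed

lemma nonBad_sets: "0 < a \<Longrightarrow> ball (0::real\<times>real) \<epsilon> - Bad a \<in> sets lebesgue"
proof -
  assume a: "0 < a"
  have "ball 0 \<epsilon> - Bad a = ball 0 \<epsilon> \<inter> - Bad a" by auto
  moreover have "ball (0::real\<times>real) \<epsilon> \<inter> - Bad a \<in> sets lebesgue"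
    by (intro sets.Int open_leb open_ball sets_completionI_sets) (simp add: borel_closed Bad_open[OF a] closed_def)
  ultimately show ?thesis by simp
qed

lemma powr_split:
  assumes e: "0 < (\<epsilon>::real)" and a: "0 < a"
  shows "4 * \<epsilon> * (4*\<epsilon>) powr (1/a) = (4 * 4 powr (1/a)) * \<epsilon>^2 * \<epsilon> powr (1/a - 1)"
proof -
  have "(4*\<epsilon>) powr (1/a) = 4 powr (1/a) * \<epsilon> powr (1/a)" using e by (simp add: powr_mult)
  moreover have "\<epsilon> powr (1/a) = \<epsilon> powr 1 * \<epsilon> powr (1/a - 1)" by (subst powr_add[symmetric]) simp
  moreover have "\<epsilon> powr 1 = \<epsilon>" using e by simp
  ultimately show ?thesis by (simp add: power2_eq_square)
qed

theorem not_eas: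
  assumes a: "0 < a" "a < 1"
  shows "\<not> ess_as (vf a) {0}"
proof
  assume "ess_as (vf a) {0}"
  then obtain N where N: "N \<in> sets lebesgue" and rel: "as_rel (vf a) {0} N"
    and lim: "((\<lambda>\<epsilon>. measure lebesgue (nbhd {0} \<epsilon> \<inter> N) / measure lebesgue (nbhd {0} \<epsilon>)) \<longlongrightarrow> 1) (at_right 0)"
    unfolding ess_as_def by blast
  define \<delta> where "\<delta> = a powr (1/a)"
  have \<delta>: "0 < \<delta>" "\<delta> powr a \<le> a" using a by (auto simp: \<delta>_def powr_powr)
  have H: "\<forall>U. open U \<and> {0} \<subseteq> U \<longrightarrow> (\<exists>V. open V \<and> {0} \<subseteq> V \<and> (\<forall>p\<in>V \<inter> N. stays_in (vf a) p U))"
    using rel unfolding as_rel_def by (rule conjunct1)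
  have "open (ball (0::real\<times>real) \<delta>) \<and> {0} \<subseteq> ball (0::real\<times>real) \<delta>" using \<delta>(1) by simp
  then have "\<exists>V. open V \<and> {0} \<subseteq> V \<and> (\<forall>p\<in>V \<inter> N. stays_in (vf a) p (ball 0 \<delta>))"
    by (rule H[rule_format])
  then obtain V where V0: "open V" "{0} \<subseteq> V" "\<forall>p\<in>V \<inter> N. stays_in (vf a) p (ball 0 \<delta>)"
    by (elim exE conjE)
  have V: "open V" "0 \<in> V" "\<And>p. p \<in> V \<inter> N \<Longrightarrow> stays_in (vf a) p (ball 0 \<delta>)"
    using V0 by auto
  have "\<exists>W. open W \<and> {0} \<subseteq> W \<and> (\<forall>p\<in>W \<inter> N. attracted (vf a) {0} p)"
    using rel unfolding as_rel_def by (rule conjunct2)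
  then obtain W where W0: "open W" "{0} \<subseteq> W" "\<forall>p\<in>W \<inter> N. attracted (vf a) {0} p"
    by (elim exE conjE)
  have W: "open W" "0 \<in> W" "\<And>p. p \<in> W \<inter> N \<Longrightarrow> attracted (vf a) {0} p"
    using W0 by auto
  obtain e0 where e0: "0 < e0" "ball 0 e0 \<subseteq> V \<inter> W"
    using V W by (meson IntI open_Int open_contains_ball_eq)
  define V2 where "V2 = unit_ball_vol 2"
  have V2: "0 < V2" by (simp add: V2_def)
  define K where "K = 4 * 4 powr (1/a)"
  have q: "0 < 1/a - 1" using a by (simp add: field_simps)
  have tz0: "((\<lambda>\<epsilon>::real. \<epsilon> powr (1/a - 1)) \<longlongrightarrow> 0) (at_right 0)"
    by (rule tendsto_zero_powrI[OF tendsto_ident_at tendsto_const _ q])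
      (auto intro: eventually_mono[OF eventually_at_right_less])
  have tz: "((\<lambda>\<epsilon>::real. K * \<epsilon> powr (1/a - 1)) \<longlongrightarrow> 0) (at_right 0)"
    by (rule tendsto_mult_right_zero[OF tz0])
  have ev1: "\<forall>\<^sub>F \<epsilon> in at_right 0. K * \<epsilon> powr (1/a - 1) < V2 / 2"
    using order_tendstoD(2)[OF tz, of "V2/2"] V2 by simp
  have ev2: "\<forall>\<^sub>F \<epsilon> in at_right 0. 1/2 < measure lebesgue (nbhd {0} \<epsilon> \<inter> N) / measure lebesgue (nbhd {0} \<epsilon>)"
    using order_tendstoD(1)[OF lim, of "1/2"] by simp
  have ev3: "\<forall>\<^sub>F \<epsilon> in at_right 0. \<epsilon> \<in> {0<..<e0}" by (rule eventually_at_right_real[OF e0(1)])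
  have "\<forall>\<^sub>F \<epsilon> in at_right 0. K * \<epsilon> powr (1/a - 1) < V2 / 2 \<and>
      1/2 < measure lebesgue (nbhd {0} \<epsilon> \<inter> N) / measure lebesgue (nbhd {0} \<epsilon>) \<and> \<epsilon> \<in> {0<..<e0}"
    using ev1 ev2 ev3 by (intro eventually_conj)
  then obtain b where b: "0 < b" and bH: "\<And>y. 0 < y \<Longrightarrow> y < b \<Longrightarrow> K * y powr (1/a - 1) < V2 / 2 \<and>
      1/2 < measure lebesgue (nbhd {0} y \<inter> N) / measure lebesgue (nbhd {0} y) \<and> y \<in> {0<..<e0}"
    unfolding eventually_at_right_field by blast
  define \<epsilon> where "\<epsilon> = b / 2"
  have \<epsilon>: "0 < \<epsilon>" "\<epsilon> < b" using b by (auto simp: \<epsilon>_def)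
  have H1: "K * \<epsilon> powr (1/a - 1) < V2 / 2"
    and H2: "1/2 < measure lebesgue (ball 0 \<epsilon> \<inter> N) / measure lebesgue (ball (0::real\<times>real) \<epsilon>)"
    and H3: "\<epsilon> < e0"
    using bH[OF \<epsilon>] by (auto simp: nbhd0)
  have mb: "measure lebesgue (ball (0::real\<times>real) \<epsilon>) = V2 * \<epsilon>^2"
    using measure_ball2[OF \<epsilon>(1)] by (simp add: V2_def)
  have mbpos: "0 < V2 * \<epsilon>^2" using V2 \<epsilon> by simp
  have A: "V2 * \<epsilon>^2 / 2 < measure lebesgue (ball 0 \<epsilon> \<inter> N)"
    using H2 mbpos unfolding mb by (simp add: field_simps)
  have B: "measure lebesgue (ball 0 \<epsilon> - Bad a) < V2 * \<epsilon>^2 / 2"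
  proof -
    have "measure lebesgue (ball 0 \<epsilon> - Bad a) \<le> 4 * \<epsilon> * (4*\<epsilon>) powr (1/a)"
      by (rule measure_nonBad[OF a(1) \<epsilon>(1)])
    also have "\<dots> = (K * \<epsilon> powr (1/a - 1)) * \<epsilon>^2"
      using powr_split[OF \<epsilon>(1) a(1)] by (simp add: K_def)
    also have "\<dots> < (V2 / 2) * \<epsilon>^2" using H1 \<epsilon> by (intro mult_strict_right_mono) auto
    finally show ?thesis by simp
  qed
  have sN: "ball (0::real\<times>real) \<epsilon> \<inter> N \<in> sets lebesgue" by (intro sets.Int open_leb open_ball N)
  have sNB: "ball (0::real\<times>real) \<epsilon> \<inter> N \<inter> Bad a \<in> sets lebesgue"
    by (intro sets.Int open_leb open_ball N Bad_open a(1))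
  have sB: "ball (0::real\<times>real) \<epsilon> - Bad a \<in> sets lebesgue" by (rule nonBad_sets[OF a(1)])
  have C: "measure lebesgue (ball 0 \<epsilon> \<inter> N) \<le> measure lebesgue (ball 0 \<epsilon> \<inter> N \<inter> Bad a) + measure lebesgue (ball 0 \<epsilon> - Bad a)"
  proof -
    have "measure lebesgue (ball 0 \<epsilon> \<inter> N) \<le> measure lebesgue ((ball 0 \<epsilon> \<inter> N \<inter> Bad a) \<union> (ball 0 \<epsilon> - Bad a))"
    proof (rule measure_mono_fmeasurable)
      show "ball 0 \<epsilon> \<inter> N \<subseteq> (ball 0 \<epsilon> \<inter> N \<inter> Bad a) \<union> (ball 0 \<epsilon> - Bad a)" by auto
      show "ball 0 \<epsilon> \<inter> N \<in> sets lebesgue" by (rule sN)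
      show "(ball 0 \<epsilon> \<inter> N \<inter> Bad a) \<union> (ball 0 \<epsilon> - Bad a) \<in> lmeasurable"
        by (rule fmeasurableI2[OF lmeasurable_ball[of 0 \<epsilon>]]) (use sNB sB in auto)
    qed
    also have "\<dots> \<le> measure lebesgue (ball 0 \<epsilon> \<inter> N \<inter> Bad a) + measure lebesgue (ball 0 \<epsilon> - Bad a)"
      by (rule measure_Un_le[OF sNB sB])
    finally show ?thesis .
  qed
  have "0 < measure lebesgue (ball 0 \<epsilon> \<inter> N \<inter> Bad a)" using A B C by linarith
  then have "ball 0 \<epsilon> \<inter> N \<inter> Bad a \<noteq> {}" by auto
  then obtain p where p: "p \<in> ball 0 \<epsilon>" "p \<in> N" "p \<in> Bad a" by blast
  have pVW: "p \<in> V" "p \<in> W" using p(1) e0 H3 by auto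
  obtain \<gamma> where g: "complete_sol (vf a) p \<gamma>"
    using W(3)[of p] pVW p(2) unfolding attracted_def by blast
  have st: "stays_in (vf a) p (ball 0 \<delta>)" using V(3)[of p] pVW p(2) by blast
  have stay: "norm (\<gamma> t) < \<delta>" if t: "0 \<le> t" for t
  proof -
    have "sol_on (vf a) p t \<gamma>" by (rule complete_sol_on[OF g t])
    then have "\<gamma> t \<in> ball 0 \<delta>" using st t unfolding stays_in_def by auto
    then show ?thesis by simp
  qed
  show False
    by (rule Bl_escape[OF a(1) g _ _ \<delta> stay]) (use p(3) in \<open>auto simp: Bad_def\<close>)
qed

lemma conv_of_omega:
  fixes \<gamma> :: "real \<Rightarrow> real \<times> real"
  assumes B: "\<And>t. 0 \<le> t \<Longrightarrow> norm (\<gamma> t) \<le> B" and om: "omega_limit \<gamma> \<subseteq> {0}"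
  shows "(\<gamma> \<longlongrightarrow> 0) at_top"
proof (rule ccontr)
  assume nc: "\<not> (\<gamma> \<longlongrightarrow> 0) at_top"
  then obtain e where e: "0 < e" and ne: "\<not> eventually (\<lambda>t. dist (\<gamma> t) 0 < e) at_top"
    unfolding tendsto_iff by blast
  have ex: "\<exists>t. real n \<le> t \<and> e \<le> norm (\<gamma> t)" for n :: nat
  proof (rule ccontr)
    assume "\<not> (\<exists>t. real n \<le> t \<and> e \<le> norm (\<gamma> t))"
    then have "\<forall>t\<ge>real n. norm (\<gamma> t) < e" by (metis not_le)
    then have "\<forall>t\<ge>real n. dist (\<gamma> t) 0 < e" by simp
    then have "eventually (\<lambda>t. dist (\<gamma> t) 0 < e) at_top" unfolding eventually_at_top_linorder by blast
    with ne show False by simp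
  qed
  then obtain s where s: "\<And>n. real n \<le> s n" "\<And>n. e \<le> norm (\<gamma> (s n))" by metis
  have inS: "\<forall>n. (\<gamma> \<circ> s) n \<in> cball 0 B"
  proof
    fix n
    have "0 \<le> s n" using s(1)[of n] by (meson of_nat_0_le_iff order_trans)
    then show "(\<gamma> \<circ> s) n \<in> cball 0 B" using B by simp
  qed
  have "seq_compact (cball (0::real\<times>real) B)" by (rule compact_imp_seq_compact) simp
  then obtain l r where lr: "strict_mono (r :: nat \<Rightarrow> nat)" "((\<gamma> \<circ> s) \<circ> r) \<longlonglongrightarrow> l"
    using seq_compactE[OF _ inS] by metis
  have fl: "filterlim (s \<circ> r) at_top sequentially"
  proof (rule filterlim_at_top_mono[OF filterlim_real_sequentially])
    show "\<forall>\<^sub>F n in sequentially. real n \<le> (s \<circ> r) n"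
    proof (rule always_eventually, rule allI)
      fix n
      have "real n \<le> real (r n)" using seq_suble[OF lr(1)] by simp
      also have "\<dots> \<le> s (r n)" by (rule s(1))
      finally show "real n \<le> (s \<circ> r) n" by simp
    qed
  qed
  have "l \<in> omega_limit \<gamma>" unfolding omega_limit_def
    using fl lr(2) by (auto simp: comp_assoc)
  then have l0: "l = 0" using om by auto
  have "(\<lambda>n. norm (((\<gamma> \<circ> s) \<circ> r) n)) \<longlonglongrightarrow> norm l" by (rule tendsto_norm[OF lr(2)])
  moreover have "eventually (\<lambda>n. e \<le> norm (((\<gamma> \<circ> s) \<circ> r) n)) sequentially"
    using s(2) by simp
  ultimately have "e \<le> norm l" by (rule tendsto_lowerbound) simp
  then show False using e l0 by simp
qed

lemma lift0_cont: "0 < a \<Longrightarrow> continuous_on UNIV (lift0 a)"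
proof -
  assume a: "0 < a"
  have "lift0 a = (\<lambda>p. (fst p, \<bar>fst p\<bar> powr a, snd p))" by (simp add: lift0_def fun_eq_iff)
  moreover have "continuous_on UNIV (\<lambda>p::real\<times>real. (fst p, \<bar>fst p\<bar> powr a, snd p))"
    by (intro continuous_on_Pair continuous_on_fst continuous_on_snd continuous_on_id cont_mpow[OF a])
  ultimately show ?thesis by simp
qed

lemma proj_norm:
  fixes u v :: st
  shows "norm ((fst u, snd (snd u)) - (fst v, snd (snd v))) \<le> norm (u - v)"
proof -
  obtain x1 w1 y1 where u: "u = (x1, w1, y1)" by (cases u) auto
  obtain x2 w2 y2 where v: "v = (x2, w2, y2)" by (cases v) auto
  show ?thesis unfolding u v by (simp add: norm_Pair)
qed

lemma comp_diff_le:
  fixes u v :: st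
  shows "\<bar>fst u\<bar> \<le> \<bar>fst v\<bar> + norm (u - v)" "\<bar>fst (snd u)\<bar> \<le> \<bar>fst (snd v)\<bar> + norm (u - v)"
    "\<bar>snd (snd u)\<bar> \<le> \<bar>snd (snd v)\<bar> + norm (u - v)"
  using comp_le_norm[of "u - v"] by auto

lemma inA_open: "0 < a \<Longrightarrow> open {r. inA a r \<and> bnd a r < \<delta>}"
proof -
  assume a: "0 < a"
  have "{r. inA a r \<and> bnd a r < \<delta>} = {r::real\<times>real. (1/2) * \<bar>fst r\<bar> powr a < \<bar>snd r\<bar>} \<inter> {r. bnd a r < \<delta>}"
    by (auto simp: inA_def)
  moreover have "open {r::real\<times>real. (1/2) * \<bar>fst r\<bar> powr a < \<bar>snd r\<bar>}"
    by (rule open_Collect_less) (intro continuous_intros cont_mpow[OF a])+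
  moreover have "open {r::real\<times>real. bnd a r < \<delta>}"
    unfolding bnd_def by (rule open_Collect_less) (intro continuous_intros cont_mpow[OF a])+
  ultimately show ?thesis by auto
qed

lemma small_bnd:
  assumes a: "0 < a" and d: "0 < \<delta>" and r: "norm r < min (\<delta>/4) ((\<delta>/4) powr (1/a))"
  shows "bnd a r < \<delta>"
proof -
  have x: "\<bar>fst r\<bar> < min (\<delta>/4) ((\<delta>/4) powr (1/a))"
    using r by (metis norm_fst_le prod.collapse real_norm_def le_less_trans)
  have y: "\<bar>snd r\<bar> < \<delta>/4"
    using r by (metis norm_snd_le prod.collapse real_norm_def le_less_trans min.strict_boundedE)
  have "\<bar>fst r\<bar> powr a < ((\<delta>/4) powr (1/a)) powr a" using x a by (intro powr_less_mono2) auto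
  also have "\<dots> = \<delta>/4" using a d by (simp add: powr_powr)
  finally have m: "\<bar>fst r\<bar> powr a < \<delta>/4" .
  have "max \<bar>snd r\<bar> (\<bar>fst r\<bar> powr a) < \<delta>/4" using y m by simp
  moreover have "\<bar>fst r\<bar> < \<delta>/4" using x by simp
  ultimately show ?thesis unfolding bnd_def by linarith
qed

lemma reach_A:
  assumes a: "0 < a" and c: "complete_sol (vf a) p \<gamma>" and p0: "p \<noteq> 0"
    and lim: "(\<gamma> \<longlongrightarrow> 0) at_top" and T0: "0 \<le> T0"
  shows "\<exists>t1\<ge>T0. inA a (\<gamma> t1)"
proof (rule ccontr)
  assume "\<not> (\<exists>t1\<ge>T0. inA a (\<gamma> t1))"
  then have H: "\<And>t. T0 \<le> t \<Longrightarrow> \<bar>snd (\<gamma> t)\<bar> \<le> (1/2) * \<bar>fst (\<gamma> t)\<bar> powr a"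
    by (auto simp: inA_def not_less)
  have mono: "(fst (\<gamma> T0))^2 \<le> (fst (\<gamma> t))^2" if t: "T0 \<le> t" for t
  proof -
    have s: "sol_on (vf a) p t \<gamma>" by (rule complete_sol_on[OF c]) (use t T0 in auto)
    show ?thesis
    proof (rule deriv_nonneg_mono[where a=T0 and b=t and f="\<lambda>s. (fst (\<gamma> s))^2"
          and f'="\<lambda>u. 2 * (fst (\<gamma> u))^2 * ((1/2) * \<bar>fst (\<gamma> u)\<bar> powr a - \<bar>snd (\<gamma> u)\<bar>)"])
      fix u assume u: "u \<in> {T0..t}"
      then have u0: "u \<in> {0..t}" using T0 by auto
      show "((\<lambda>s. (fst (\<gamma> s))^2) has_real_derivative 2 * (fst (\<gamma> u))^2 * ((1/2) * \<bar>fst (\<gamma> u)\<bar> powr a - \<bar>snd (\<gamma> u)\<bar>)) (at u within {T0..t})"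
        by (rule within_sub[OF sol_derivs(4)[OF a s u0] T0])
      have "0 \<le> (1/2) * \<bar>fst (\<gamma> u)\<bar> powr a - \<bar>snd (\<gamma> u)\<bar>" using H[of u] u by simp
      then show "0 \<le> 2 * (fst (\<gamma> u))^2 * ((1/2) * \<bar>fst (\<gamma> u)\<bar> powr a - \<bar>snd (\<gamma> u)\<bar>)" by simp
    qed (use t in auto)
  qed
  have "((\<lambda>t. (fst (\<gamma> t))^2) \<longlongrightarrow> (fst (0::real\<times>real))^2) at_top"
    by (intro tendsto_intros lim)
  then have "((\<lambda>t. (fst (\<gamma> t))^2) \<longlongrightarrow> 0) at_top" by simp
  then have "(fst (\<gamma> T0))^2 \<le> 0"
    by (rule tendsto_lowerbound) (auto simp: eventually_at_top_linorder intro!: exI[of _ T0] mono)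
  then have x0: "fst (\<gamma> T0) = 0" by simp
  then have "snd (\<gamma> T0) = 0" using H[of T0] a by simp
  with x0 have g0: "\<gamma> T0 = 0" by (simp add: prod_eq_iff)
  have s: "sol_on (vf a) p T0 \<gamma>" by (rule complete_sol_on[OF c T0])
  have T0i: "T0 \<in> {0..T0}" using T0 by simp
  show False
  proof (cases "fst p = 0")
    case True
    then have "snd p \<noteq> 0" using p0 by (simp add: prod_eq_iff)
    then have "snd (\<gamma> T0) \<noteq> 0" by (rule sol_sign(4)[OF a s T0i])
    then show False using g0 by simp
  next
    case False
    then have "fst (\<gamma> T0) \<noteq> 0" by (rule sol_sign(2)[OF a s T0i])
    then show False using g0 by simp
  qed
qed

lemma tendsto_shift:
  fixes \<zeta> :: "real \<Rightarrow> real \<times> real"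
  assumes "((\<lambda>s. \<zeta> (t1 + s)) \<longlongrightarrow> (l::real\<times>real)) at_top"
  shows "(\<zeta> \<longlongrightarrow> l) at_top"
  unfolding tendsto_iff
proof (intro allI impI)
  fix e :: real assume e: "0 < e"
  have "\<forall>\<^sub>F s in at_top. dist (\<zeta> (t1 + s)) l < e" using assms e unfolding tendsto_iff by blast
  then obtain N where N0: "\<forall>s\<ge>N. dist (\<zeta> (t1 + s)) l < e"
    by (auto simp: eventually_at_top_linorder)
  then have N: "\<And>s. N \<le> s \<Longrightarrow> dist (\<zeta> (t1 + s)) l < e" by blast
  show "\<forall>\<^sub>F t in at_top. dist (\<zeta> t) l < e"
    unfolding eventually_at_top_linorder
  proof (intro exI allI impI)
    fix t assume "N + t1 \<le> t"
    then have "dist (\<zeta> (t1 + (t - t1))) l < e" by (intro N) simp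
    then show "dist (\<zeta> t) l < e" by simp
  qed
qed

lemma L_nbhd:
  assumes a: "0 < a" "a \<le> 1" and pL: "p \<in> local_basin (vf a) {0} \<delta>" and p0: "p \<noteq> 0"
  shows "\<exists>\<rho>>0. ball p \<rho> \<subseteq> local_basin (vf a) {0} \<delta>"
proof -
  have pb: "attracted (vf a) {0} p" and pst: "stays_in (vf a) p (nbhd {0} \<delta>)"
    using pL by (auto simp: local_basin_def basin_def)
  obtain \<gamma> where g: "complete_sol (vf a) p \<gamma>" using pb by (auto simp: attracted_def)
  have om: "omega_limit \<gamma> \<subseteq> {0}" using pb g by (auto simp: attracted_def)
  have inball: "norm (\<gamma> t) < \<delta>" if "0 \<le> t" for t
  proof -
    have "sol_on (vf a) p t \<gamma>" by (rule complete_sol_on[OF g that])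
    then have "\<gamma> t \<in> nbhd {0} \<delta>" using pst that unfolding stays_in_def by auto
    then show ?thesis by (simp add: nbhd0)
  qed
  have \<delta>0: "0 < \<delta>" using norm_ge_zero[of "\<gamma> 0"] inball[of 0] by linarith
  have lim: "(\<gamma> \<longlongrightarrow> 0) at_top" by (rule conv_of_omega[OF _ om]) (rule less_imp_le[OF inball])
  define \<eta>0 where "\<eta>0 = min (\<delta>/4) ((\<delta>/4) powr (1/a))"
  have \<eta>0: "0 < \<eta>0" using \<delta>0 by (simp add: \<eta>0_def)
  obtain T0 where T0: "0 \<le> T0" "\<And>t. T0 \<le> t \<Longrightarrow> norm (\<gamma> t) < \<eta>0"
  proof -
    have "\<forall>\<^sub>F t in at_top. dist (\<gamma> t) 0 < \<eta>0" using lim \<eta>0 unfolding tendsto_iff by blast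
    then obtain N where "\<forall>t\<ge>N. dist (\<gamma> t) 0 < \<eta>0" by (auto simp: eventually_at_top_linorder)
    then show ?thesis by (intro that[of "max N 0"]) auto
  qed
  obtain t1 where t1: "T0 \<le> t1" "inA a (\<gamma> t1)" using reach_A[OF a(1) g p0 lim T0(1)] by blast
  have t10: "0 \<le> t1" using t1 T0 by simp
  define r where "r = \<gamma> t1"
  have "norm (\<gamma> t1) < min (\<delta>/4) ((\<delta>/4) powr (1/a))" using T0(2)[OF t1(1)] by (simp add: \<eta>0_def)
  then have rO: "r \<in> {r. inA a r \<and> bnd a r < \<delta>}"
    using t1 small_bnd[OF a(1) \<delta>0] by (simp add: r_def)
  obtain \<eta>2 where \<eta>2: "0 < \<eta>2" "ball r \<eta>2 \<subseteq> {r. inA a r \<and> bnd a r < \<delta>}"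
    using inA_open[OF a(1), of \<delta>] rO by (meson open_contains_ball)
  have s1: "sol_on (vf a) p t1 \<gamma>" by (rule complete_sol_on[OF g t10])
  have cn: "continuous_on {0..t1} (\<lambda>t. norm (\<gamma> t))" using sol_cont[OF s1] by (intro continuous_intros)
  obtain s where s: "s \<in> {0..t1}" "\<And>t. t \<in> {0..t1} \<Longrightarrow> norm (\<gamma> t) \<le> norm (\<gamma> s)"
    using continuous_attains_sup[OF compact_Icc _ cn] t10 by auto
  define M1 where "M1 = norm (\<gamma> s)"
  have M1: "M1 < \<delta>" using inball[of s] s(1) by (simp add: M1_def)
  obtain R0 where R0: "0 \<le> R0" "\<And>t. t \<in> {0..t1} \<Longrightarrow> inbox R0 (lift a \<gamma> t)"
    using sol_box[OF a(1) s1] by blast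
  define R where "R = R0 + \<delta> + 2"
  have R: "0 \<le> R" "R0 \<le> R" using R0 \<delta>0 by (auto simp: R_def)
  have liftpsi: "lift a \<gamma> t = psi a R (lift0 a p) t" if "t \<in> {0..t1}" for t
    by (rule sol_lift_psi[OF a s1 R(1) _ that]) (use R0 R in \<open>auto intro: inbox_mono\<close>)
  define \<eta> where "\<eta> = min (1/2) (min ((\<delta> - M1)/2) (\<eta>2/2))"
  have \<eta>: "0 < \<eta>" "\<eta> \<le> 1/2" "\<eta> < \<delta> - M1" "\<eta> < \<eta>2" using M1 \<eta>2 by (auto simp: \<eta>_def min_def)
  define E where "E = exp (KL R * t1)"
  have E: "0 < E" by (simp add: E_def)
  have "isCont (lift0 a) p" using lift0_cont[OF a(1)] continuous_on_eq_continuous_at[OF open_UNIV, of "lift0 a"] by blast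
  then have "\<forall>e>0. \<exists>d>0. \<forall>q. dist q p < d \<longrightarrow> dist (lift0 a q) (lift0 a p) < e"
    unfolding continuous_at_eps_delta .
  moreover have "0 < \<eta> / E" using \<eta> E by simp
  ultimately obtain \<rho> where \<rho>: "0 < \<rho>" "\<And>q. dist q p < \<rho> \<Longrightarrow> dist (lift0 a q) (lift0 a p) < \<eta> / E"
    by blast
  have a0: "0 \<le> a" using a by simp
  have t1i: "t1 \<in> {0..t1}" using t10 by simp
  show ?thesis
  proof (intro exI conjI subsetI)
    show "0 < \<rho>" by (rule \<rho>(1))
    fix q assume q: "q \<in> ball p \<rho>"
    then have dq: "norm (lift0 a q - lift0 a p) < \<eta> / E" using \<rho>(2)[of q] by (simp add: dist_commute dist_norm norm_minus_commute)
    define \<psi>q where "\<psi>q = psi a R (lift0 a q)"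
    have close: "norm (\<psi>q t - lift a \<gamma> t) < \<eta>" if t: "t \<in> {0..t1}" for t
    proof -
      have "norm (\<psi>q t - lift a \<gamma> t) = norm (psi a R (lift0 a q) t - psi a R (lift0 a p) t)"
        using liftpsi[OF t] by (simp add: \<psi>q_def)
      also have "\<dots> \<le> norm (lift0 a q - lift0 a p) * exp (KL R * t)"
        by (rule psi_dep[OF a0 a(2) R(1)]) (use t in auto)
      also have "\<dots> \<le> norm (lift0 a q - lift0 a p) * E"
        unfolding E_def using t KL_nonneg[OF R(1)] by (intro mult_left_mono) (auto intro: mult_left_mono)
      also have "\<dots> < (\<eta> / E) * E" using dq E by (intro mult_strict_right_mono) auto
      also have "\<dots> = \<eta>" using E by simp
      finally show ?thesis .
    qed
    have maxcq: "maxc (\<psi>q t) < R" if t: "t \<in> {0..t1}" for t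
    proof -
      have b: "inbox R0 (lift a \<gamma> t)" by (rule R0(2)[OF t])
      have n: "norm (\<psi>q t - lift a \<gamma> t) < \<eta>" by (rule close[OF t])
      show ?thesis using comp_diff_le[of "\<psi>q t" "lift a \<gamma> t"] b n \<eta> \<delta>0 unfolding inbox_def R_def maxc_def by auto
    qed
    have boxq: "inbox R (\<psi>q t)" if t: "t \<in> {0..t1}" for t
      using maxcq[OF t] by (intro maxc_inbox) simp
    have sq: "sol_on (vf a) q t1 (phi a R q)"
      by (rule genuine(1)[OF a R(1) t10]) (use boxq in \<open>simp add: \<psi>q_def\<close>)
    have phiclose: "norm (phi a R q t - \<gamma> t) < \<eta>" if t: "t \<in> {0..t1}" for t
    proof -
      have "phi a R q t - \<gamma> t = (fst (\<psi>q t), snd (snd (\<psi>q t))) - (fst (lift a \<gamma> t), snd (snd (lift a \<gamma> t)))"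
        by (simp add: phi_def \<psi>q_def lift_def)
      then have "norm (phi a R q t - \<gamma> t) \<le> norm (\<psi>q t - lift a \<gamma> t)" using proj_norm by metis
      then show ?thesis using close[OF t] by linarith
    qed
    have phiball: "norm (phi a R q t) < \<delta>" if t: "t \<in> {0..t1}" for t
    proof -
      have "norm (phi a R q t) \<le> norm (\<gamma> t) + norm (phi a R q t - \<gamma> t)"
        using norm_triangle_ineq[of "\<gamma> t" "phi a R q t - \<gamma> t"] by simp
      moreover have "norm (\<gamma> t) \<le> M1" using s(2)[OF t] by (simp add: M1_def)
      ultimately show ?thesis using phiclose[OF t] \<eta> by linarith
    qed
    define rq where "rq = phi a R q t1"
    have rqO: "inA a rq" "bnd a rq < \<delta>"
    proof -
      have "norm (rq - r) < \<eta>2" using phiclose[OF t1i] \<eta> by (simp add: rq_def r_def)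
      then have "rq \<in> ball r \<eta>2" by (simp add: dist_norm norm_minus_commute)
      then show "inA a rq" "bnd a rq < \<delta>" using \<eta>2(2) by auto
    qed
    have cq: "complete_sol (vf a) q (phi a R q)"
    proof (rule genuine_complete[OF a R(1)])
      fix t :: real assume t: "0 \<le> t"
      show "inbox R (psi a R (lift0 a q) t)"
      proof (rule box_forever[OF a R(1) _ _ t])
        show "maxc (lift0 a q) < R" using maxcq[of 0] t10 psi_sol(1)[OF a0 a(2) R(1)] by (simp add: \<psi>q_def)
        fix u assume u: "0 < u" and so: "sol_on (vf a) q u (phi a R q)"
          and W: "\<And>s. s \<in> {0..u} \<Longrightarrow> fst (snd (psi a R (lift0 a q) s)) = \<bar>fst (psi a R (lift0 a q) s)\<bar> powr a"
        show "maxc (psi a R (lift0 a q) u) < R"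
        proof (cases "u \<le> t1")
          case True
          then show ?thesis using maxcq[of u] u by (simp add: \<psi>q_def)
        next
          case False
          have sh: "sol_on (vf a) rq (u - t1) (\<lambda>s. phi a R q (t1 + s))"
            using sol_shift[OF so t10] False by (simp add: rq_def)
          have ui: "u - t1 \<in> {0..u - t1}" using False by simp
          have B: "\<bar>fst (phi a R q u)\<bar> \<le> bnd a rq" "\<bar>snd (phi a R q u)\<bar> \<le> bnd a rq"
            "\<bar>fst (phi a R q u)\<bar> powr a \<le> bnd a rq"
            using A_norm_bound(2-4)[OF a(1) sh rqO(1) ui] by auto
          have Wu: "fst (snd (psi a R (lift0 a q) u)) = \<bar>fst (psi a R (lift0 a q) u)\<bar> powr a"
            using W[of u] u by simp
          show ?thesis using B Wu rqO(2) R0(1) unfolding maxc_def phi_def R_def by auto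
        qed
      qed
    qed
    show "q \<in> local_basin (vf a) {0} \<delta>"
      unfolding local_basin_def basin_def attracted_def stays_in_def
    proof (intro CollectI conjI allI impI ballI)
      show "\<exists>\<gamma>. complete_sol (vf a) q \<gamma>" using cq by blast
      fix \<zeta> assume z: "complete_sol (vf a) q \<zeta>"
      have zt1: "\<zeta> t1 = rq"
        using sol_unique[OF a complete_sol_on[OF z t10] sq t1i] by (simp add: rq_def)
      have "complete_sol (vf a) rq (\<lambda>s. \<zeta> (t1 + s))" using complete_shift[OF z t10] zt1 by simp
      then have "((\<lambda>s. \<zeta> (t1 + s)) \<longlongrightarrow> 0) at_top" by (rule A_conv[OF a(1) _ rqO(1)])
      then have "(\<zeta> \<longlongrightarrow> 0) at_top" by (rule tendsto_shift)
      then show "omega_limit \<zeta> \<subseteq> {0}" by (rule omega_sub)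
    next
      fix T \<zeta> t assume z: "sol_on (vf a) q T \<zeta>" and t: "t \<in> {0..T}"
      show "\<zeta> t \<in> nbhd {0} \<delta>"
      proof (cases "t \<le> t1")
        case True
        have "\<zeta> t = phi a R q t"
          by (rule sol_unique[OF a sol_restrict[where T'=t, OF z] sol_restrict[where T'=t, OF sq]])
            (use t True in auto)
        then show ?thesis using phiball[of t] t True by (simp add: nbhd0)
      next
        case False
        have T1: "t1 \<le> T" using t False by auto
        have zt1: "\<zeta> t1 = rq"
          using sol_unique[OF a sol_restrict[OF z t10 T1] sq t1i] by (simp add: rq_def)
        have sh: "sol_on (vf a) rq (T - t1) (\<lambda>s. \<zeta> (t1 + s))" using sol_shift[OF z t10 T1] zt1 by simp
        have "norm (\<zeta> (t1 + (t - t1))) \<le> bnd a rq"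
          by (rule A_norm_bound(1)[OF a(1) sh rqO(1)]) (use t False in auto)
        then show ?thesis using rqO(2) by (simp add: nbhd0)
      qed
    qed
  qed
qed

lemma L_meas:
  assumes a: "0 < a" "a \<le> 1"
  shows "local_basin (vf a) {0} \<delta> \<in> sets lebesgue"
proof -
  define L where "L = local_basin (vf a) {0} \<delta>"
  have oL: "open (L - {0})"
    unfolding open_contains_ball
  proof
    fix p assume p: "p \<in> L - {0}"
    then obtain \<rho> where \<rho>: "0 < \<rho>" "ball p \<rho> \<subseteq> L" using L_nbhd[OF a, of p \<delta>] by (auto simp: L_def)
    have np: "0 < norm p" using p by simp
    have "ball p (min \<rho> (norm p)) \<subseteq> L - {0}"
    proof
      fix x assume x: "x \<in> ball p (min \<rho> (norm p))"
      then have "x \<in> L" using \<rho>(2) by auto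
      moreover have "x \<noteq> 0" using x by (auto simp: dist_norm)
      ultimately show "x \<in> L - {0}" by simp
    qed
    then show "\<exists>e>0. ball p e \<subseteq> L - {0}" using \<rho>(1) np by (intro exI[of _ "min \<rho> (norm p)"]) auto
  qed
  have s1: "L - {0} \<in> sets lebesgue" by (rule open_leb[OF oL])
  have s2: "L \<inter> {0} \<in> sets lebesgue"
  proof (cases "0 \<in> L")
    case True
    then have "L \<inter> {0} = {0}" by auto
    moreover have "{0::real\<times>real} \<in> sets lebesgue"
      by (rule sets_completionI_sets) (simp add: borel_closed)
    ultimately show ?thesis by simp
  next
    case False
    then have "L \<inter> {0} = {}" by auto
    then show ?thesis by simp
  qed
  have "L = (L - {0}) \<union> (L \<inter> {0})" by auto
  then have "L \<in> sets lebesgue" using s1 s2 by (metis sets.Un)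
  then show ?thesis by (simp add: L_def)
qed

lemma L_pos:
  assumes a: "0 < a" "a \<le> 1" and d: "0 < \<delta>"
  shows "0 < emeasure lebesgue (local_basin (vf a) {0} \<delta>)"
proof -
  define c :: "real \<times> real" where "c = (0, \<delta>/2)"
  have cS: "c \<in> {r. inA a r \<and> bnd a r < \<delta>}" using d a by (simp add: c_def inA_def bnd_def)
  obtain r0 where r0: "0 < r0" "ball c r0 \<subseteq> {r. inA a r \<and> bnd a r < \<delta>}"
    using inA_open[OF a(1), of \<delta>] cS by (meson open_contains_ball)
  have sub: "ball c r0 \<subseteq> local_basin (vf a) {0} \<delta>"
    using r0(2) A_local_basin[OF a] by blast
  have "emeasure lebesgue (ball c r0) = emeasure lborel (ball c r0)" by simp
  also have "\<dots> = ennreal (unit_ball_vol 2 * r0^2)" using emeasure_ball[of r0 c] r0(1) by (simp add: power2_eq_square)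
  finally have e: "emeasure lebesgue (ball c r0) = ennreal (unit_ball_vol 2 * r0^2)" .
  have "0 < emeasure lebesgue (ball c r0)" unfolding e using r0(1) by simp
  also have "\<dots> \<le> emeasure lebesgue (local_basin (vf a) {0} \<delta>)"
    by (rule emeasure_mono[OF sub L_meas[OF a]])
  finally show ?thesis .
qed

theorem corollary4:
  fixes a :: real
  assumes "0 < a" and "a < 1"
  shows "frag_as (vf a) {0} \<and> \<not> ess_as (vf a) {0}"
proof
  have a: "0 < a" "a \<le> 1" using assms by auto
  show "frag_as (vf a) {0}"
    unfolding frag_as_def using L_meas[OF a] L_pos[OF a] by blast
  show "\<not> ess_as (vf a) {0}" by (rule not_eas[OF assms])
qed

end
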